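(* Let $\lambda_1>0$ and $\lambda_2<0$ be real numbers and $L=(D-\lambda_1)(D-\lambda_2)$. There exists a constant $C(\lambda_1,\lambda_2)$, depending only on $\lambda_1,\lambda_2$ and not on the segment, such that for every segment $[a,b]$ and every partition $\Delta$ of $[a,b]$, \[ \|P_{\mathbb{S}(L,\Delta)}\|_{C[a,b]\to C[a,b]}\le C(\lambda_1,\lambda_2). \]
   Context: A partition of $[a,b]$ is $\Delta=\{a=t_1<t_2<\dots<t_n=b\}$ ($n\ge 2$), with subsegments $\Delta_i=[t_i,t_{i+1}]$. The space of $L$-splines $\mathbb{S}(L,\Delta)$ consists of the continuous functions $s$ on $[a,b]$ such that on each $\Delta_i$, $s$ satisfies $Ls=0$, i.e. $s|_{\Delta_i}$ is a linear combination of $e^{\lambda_1x}$ and $e^{\lambda_2x}$. $P_{\mathbb{S}(L,\Delta)}:C[a,b]\to\mathbb{S}(L,\Delta)$ is the orthogonal projection with respect to the $L_2[a,b]$ inner product (i.e. $\langle f,s\rangle=\langle Pf,s\rangle$ for all splines $s$); its norm is $\sup\{\|Pf\|_\infty: f\in C[a,b],\ \|f\|_\infty\le 1\}$. *)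

theory Defs
  imports "HOL-Analysis.Analysis"
begin

definition is_partition :: "real \<Rightarrow> real \<Rightarrow> real list \<Rightarrow> bool" where
  "is_partition a b ts \<longleftrightarrow> length ts \<ge> 2 \<and> sorted_wrt (<) ts \<and> hd ts = a \<and> last ts = b"

definition L_splines :: "real \<Rightarrow> real \<Rightarrow> real \<Rightarrow> real \<Rightarrow> real list \<Rightarrow> (real \<Rightarrow> real) set" where
  "L_splines l1 l2 a b ts = {s. continuous_on {a..b} s \<and>
     (\<forall>i. Suc i < length ts \<longrightarrow> (\<exists>c1 c2. \<forall>x\<in>{ts!i..ts!Suc i}.
         s x = c1 * exp (l1 * x) + c2 * exp (l2 * x)))}"

definition is_spline_proj :: "real \<Rightarrow> real \<Rightarrow> real \<Rightarrow> real \<Rightarrow> real list \<Rightarrow> (real \<Rightarrow> real) \<Rightarrow> (real \<Rightarrow> real) \<Rightarrow> bool" where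
  "is_spline_proj l1 l2 a b ts f s \<longleftrightarrow> s \<in> L_splines l1 l2 a b ts \<and>
     (\<forall>g \<in> L_splines l1 l2 a b ts.
        integral {a..b} (\<lambda>x. f x * g x) = integral {a..b} (\<lambda>x. s x * g x))"

text \<open>The projection operator (functions are identified by their values on [a,b];
  outside [a,b] the value is set to 0 so that the projection is a unique function).\<close>
definition spline_proj :: "real \<Rightarrow> real \<Rightarrow> real \<Rightarrow> real \<Rightarrow> real list \<Rightarrow> (real \<Rightarrow> real) \<Rightarrow> (real \<Rightarrow> real)" where
  "spline_proj l1 l2 a b ts f = (THE s. is_spline_proj l1 l2 a b ts f s \<and> (\<forall>x. x \<notin> {a..b} \<longrightarrow> s x = 0))"

end

theory Submission
  imports Defs "HOL-Analysis.Analysis"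
begin

definition Jf :: "real \<Rightarrow> real \<Rightarrow> real \<Rightarrow> real" where
  "Jf p q x = (if p = q then x else (exp ((p - q) * x) - 1) / (p - q))"

lemma Jf_0[simp]: "Jf p q 0 = 0" by (simp add: Jf_def)

lemma Jf_deriv: "(Jf p q has_real_derivative exp (p*x) * exp (- q*x)) (at x within S)"
proof (cases "p = q")
  case True
  then show ?thesis unfolding Jf_def
    by (auto intro!: derivative_eq_intros simp: exp_add[symmetric])
next
  case False
  have e: "exp ((p - q) * x) = exp (p*x) * exp (- q*x)"
    by (simp add: exp_add[symmetric] algebra_simps)
  have "((\<lambda>x. (exp ((p - q) * x) - 1) / (p - q)) has_real_derivative exp ((p - q) * x)) (at x within S)"
    using False by (auto intro!: derivative_eq_intros)
  then show ?thesis using False unfolding Jf_def e by simp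
qed

lemma Jf_deriv_eq[derivative_intros]:
  "D = exp (p*x) * exp (- q*x) \<Longrightarrow> ((\<lambda>x. Jf p q x) has_real_derivative D) (at x within S)"
  using Jf_deriv by simp

definition gL0 :: "real \<Rightarrow> real \<Rightarrow> real \<Rightarrow> real" where
  "gL0 p q x = (let P = exp (p*x); R = exp (- q*x); J = Jf p q x in (- 3*q*q - 3*p*q)*R + (- 6*p*q*q - 6*p*p*q)*R*J + (- 3*q*q - p*q)*R*R + (3*p*q + 3*p*p)*P + (- 6*p*q*q - 6*p*p*q)*P*J + (- 2*p*q + 2*p*p)*P*R + (- 12*p*q*q - 12*p*p*q)*P*R*J + (- 5*p*q - 5*p*p)*P*R*R + (3*p*q + p*p)*P*P + (3*q*q + 5*p*q + 2*p*p)*P*P*R + (3*q*q - 3*p*p)*P*P*R*R)"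

definition gL1 :: "real \<Rightarrow> real \<Rightarrow> real \<Rightarrow> real" where
  "gL1 p q x = (let P = exp (p*x); R = exp (- q*x); J = Jf p q x in (- 3*q*q*q - 3*p*q*q)*R + (- 6*p*q*q*q - 6*p*p*q*q)*R*J + (6*p*q*q + 9*p*p*q + 3*p*p*p)*P + (- 12*p*q*q*q - 18*p*p*q*q - 6*p*p*p*q)*P*J + (- 2*p*q*q + 2*p*p*p)*P*R + (- 12*p*q*q*q - 24*p*p*q*q - 12*p*p*p*q)*P*R*J + (- 6*p*q*q - 11*p*p*q - 5*p*p*p)*P*R*R + (6*p*q*q + 8*p*p*q + 2*p*p*p)*P*P + (3*q*q*q + 5*p*q*q + 6*p*p*q + 4*p*p*p)*P*P*R + (- 6*p*q*q - 12*p*p*q - 6*p*p*p)*P*P*R*R)"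

definition gL2 :: "real \<Rightarrow> real \<Rightarrow> real \<Rightarrow> real" where
  "gL2 p q x = (let P = exp (p*x); R = exp (- q*x); J = Jf p q x in (- 3*q*q*q*q + 3*p*p*q*q)*R + (- 6*p*q*q*q*q + 6*p*p*p*q*q)*R*J + (12*p*q*q*q + 18*p*p*q*q + 6*p*p*p*q)*P + (- 24*p*q*q*q*q - 36*p*p*q*q*q - 12*p*p*p*q*q)*P*J + (- 2*p*q*q*q + 2*p*p*p*q)*P*R + (- 12*p*q*q*q*q - 24*p*p*q*q*q - 12*p*p*p*q*q)*P*R*J + (- 6*p*q*q*q - 6*p*p*q*q)*P*R*R + (12*p*q*q*q + 22*p*p*q*q + 12*p*p*p*q + 2*p*p*p*p)*P*P + (3*q*q*q*q - 4*p*q*q*q - 7*p*p*q*q + 4*p*p*p*q + 4*p*p*p*p)*P*P*R + (- 12*p*q*q*q - 30*p*p*q*q - 24*p*p*p*q - 6*p*p*p*p)*P*P*R*R)"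

definition gL3 :: "real \<Rightarrow> real \<Rightarrow> real \<Rightarrow> real" where
  "gL3 p q x = (let P = exp (p*x); R = exp (- q*x); J = Jf p q x in (12*p*q*q*q*q + 30*p*p*q*q*q + 24*p*p*p*q*q + 6*p*p*p*p*q)*P + (- 24*p*q*q*q*q*q - 60*p*p*q*q*q*q - 48*p*p*p*q*q*q - 12*p*p*p*p*q*q)*P*J + (- 2*p*p*q*q*q + 2*p*p*p*p*q)*P*R + (- 12*p*p*q*q*q*q - 24*p*p*p*q*q*q - 12*p*p*p*p*q*q)*P*R*J + (12*p*q*q*q*q + 46*p*p*q*q*q + 56*p*p*p*q*q + 26*p*p*p*p*q + 4*p*p*p*p*p)*P*P + (- 18*p*q*q*q*q - 44*p*p*q*q*q - 26*p*p*p*q*q + 8*p*p*p*p*q + 8*p*p*p*p*p)*P*P*R + (- 18*p*p*q*q*q - 48*p*p*p*q*q - 42*p*p*p*p*q - 12*p*p*p*p*p)*P*P*R*R)"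

definition gL4 :: "real \<Rightarrow> real \<Rightarrow> real \<Rightarrow> real" where
  "gL4 p q x = (let P = exp (p*x); R = exp (- q*x); J = Jf p q x in (24*p*q*q*q*q*q + 48*p*p*q*q*q*q + 18*p*p*p*q*q*q - 12*p*p*p*p*q*q - 6*p*p*p*p*p*q)*P + (- 48*p*q*q*q*q*q*q - 96*p*p*q*q*q*q*q - 36*p*p*p*q*q*q*q + 24*p*p*p*p*q*q*q + 12*p*p*p*p*p*q*q)*P*J + (- 2*p*p*q*q*q*q + 2*p*p*p*q*q*q + 2*p*p*p*p*q*q - 2*p*p*p*p*p*q)*P*R + (- 12*p*p*q*q*q*q*q - 12*p*p*p*q*q*q*q + 12*p*p*p*p*q*q*q + 12*p*p*p*p*p*q*q)*P*R*J + (24*p*q*q*q*q*q + 92*p*p*q*q*q*q + 112*p*p*p*q*q*q + 52*p*p*p*p*q*q + 8*p*p*p*p*p*q)*P*P + (- 42*p*q*q*q*q*q - 104*p*p*q*q*q*q - 74*p*p*p*q*q*q - 4*p*p*p*p*q*q + 8*p*p*p*p*p*q)*P*P*R + (- 12*p*p*q*q*q*q - 24*p*p*p*q*q*q - 12*p*p*p*p*q*q)*P*P*R*R)"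

definition gL5 :: "real \<Rightarrow> real \<Rightarrow> real \<Rightarrow> real" where
  "gL5 p q x = (let P = exp (p*x); R = exp (- q*x); J = Jf p q x in (24*p*q*q*q*q*q*q + 48*p*p*q*q*q*q*q + 18*p*p*p*q*q*q*q - 12*p*p*p*p*q*q*q - 6*p*p*p*p*p*q*q)*P + (- 48*p*q*q*q*q*q*q*q - 96*p*p*q*q*q*q*q*q - 36*p*p*p*q*q*q*q*q + 24*p*p*p*p*q*q*q*q + 12*p*p*p*p*p*q*q*q)*P*J + (24*p*q*q*q*q*q*q + 116*p*p*q*q*q*q*q + 204*p*p*p*q*q*q*q + 164*p*p*p*p*q*q*q + 60*p*p*p*p*p*q*q + 8*p*p*p*p*p*p*q)*P*P + (- 48*p*q*q*q*q*q*q - 138*p*p*q*q*q*q*q - 140*p*p*p*q*q*q*q - 50*p*p*p*p*q*q*q + 8*p*p*p*p*p*q*q + 8*p*p*p*p*p*p*q)*P*P*R)"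

definition gL6 :: "real \<Rightarrow> real \<Rightarrow> real \<Rightarrow> real" where
  "gL6 p q x = (let P = exp (p*x); R = exp (- q*x); J = Jf p q x in (24*p*q*q*q*q*q*q*q + 24*p*p*q*q*q*q*q*q - 30*p*p*p*q*q*q*q*q - 30*p*p*p*p*q*q*q*q + 6*p*p*p*p*p*q*q*q + 6*p*p*p*p*p*p*q*q)*P + (- 48*p*q*q*q*q*q*q*q*q - 48*p*p*q*q*q*q*q*q*q + 60*p*p*p*q*q*q*q*q*q + 60*p*p*p*p*q*q*q*q*q - 12*p*p*p*p*p*q*q*q*q - 12*p*p*p*p*p*p*q*q*q)*P*J + (24*p*q*q*q*q*q*q*q + 116*p*p*q*q*q*q*q*q + 204*p*p*p*q*q*q*q*q + 164*p*p*p*p*q*q*q*q + 60*p*p*p*p*p*q*q*q + 8*p*p*p*p*p*p*q*q)*P*P + (- 48*p*q*q*q*q*q*q*q - 96*p*p*q*q*q*q*q*q - 36*p*p*p*q*q*q*q*q + 24*p*p*p*p*q*q*q*q + 12*p*p*p*p*p*q*q*q)*P*P*R)"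

definition gL7 :: "real \<Rightarrow> real \<Rightarrow> real \<Rightarrow> real" where
  "gL7 p q x = (let P = exp (p*x); R = exp (- q*x); J = Jf p q x in (24*p*p*q*q*q*q*q*q*q + 116*p*p*p*q*q*q*q*q*q + 204*p*p*p*p*q*q*q*q*q + 164*p*p*p*p*p*q*q*q*q + 60*p*p*p*p*p*p*q*q*q + 8*p*p*p*p*p*p*p*q*q)*P*P)"

lemma gL_step0: "(gL0 p q has_real_derivative (gL1 p q x + (- 2*q) * gL0 p q x)) (at x)"
  unfolding gL0_def gL1_def Let_def
  apply (rule derivative_eq_intros refl)+
  apply (simp add: algebra_simps)
  done

lemma gL_step1: "(gL1 p q has_real_derivative (gL2 p q x + (p - 2*q) * gL1 p q x)) (at x)"
  unfolding gL1_def gL2_def Let_def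
  apply (rule derivative_eq_intros refl)+
  apply (simp add: algebra_simps)
  done

lemma gL_step2: "(gL2 p q has_real_derivative (gL3 p q x + (- q) * gL2 p q x)) (at x)"
  unfolding gL2_def gL3_def Let_def
  apply (rule derivative_eq_intros refl)+
  apply (simp add: algebra_simps)
  done

lemma gL_step3: "(gL3 p q has_real_derivative (gL4 p q x + (2*p - 2*q) * gL3 p q x)) (at x)"
  unfolding gL3_def gL4_def Let_def
  apply (rule derivative_eq_intros refl)+
  apply (simp add: algebra_simps)
  done

lemma gL_step4: "(gL4 p q has_real_derivative (gL5 p q x + (p - q) * gL4 p q x)) (at x)"
  unfolding gL4_def gL5_def Let_def
  apply (rule derivative_eq_intros refl)+
  apply (simp add: algebra_simps)
  done

lemma gL_step5: "(gL5 p q has_real_derivative (gL6 p q x + (2*p - q) * gL5 p q x)) (at x)"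
  unfolding gL5_def gL6_def Let_def
  apply (rule derivative_eq_intros refl)+
  apply (simp add: algebra_simps)
  done

lemma gL_step6: "(gL6 p q has_real_derivative (gL7 p q x + (p) * gL6 p q x)) (at x)"
  unfolding gL6_def gL7_def Let_def
  apply (rule derivative_eq_intros refl)+
  apply (simp add: algebra_simps)
  done

lemma gL_at0_0: "gL0 p q 0 = 0"
  unfolding gL0_def Let_def by (simp add: algebra_simps)

lemma gL_at0_1: "gL1 p q 0 = 0"
  unfolding gL1_def Let_def by (simp add: algebra_simps)

lemma gL_at0_2: "gL2 p q 0 = 0"
  unfolding gL2_def Let_def by (simp add: algebra_simps)

lemma gL_at0_3: "gL3 p q 0 = (6*p*q*q*q*q + 12*p*p*q*q*q + 6*p*p*p*q*q)"
  unfolding gL3_def Let_def by (simp add: algebra_simps)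

lemma gL_at0_4: "gL4 p q 0 = (6*p*q*q*q*q*q + 22*p*p*q*q*q*q + 34*p*p*p*q*q*q + 26*p*p*p*p*q*q + 8*p*p*p*p*p*q)"
  unfolding gL4_def Let_def by (simp add: algebra_simps)

lemma gL_at0_5: "gL5 p q 0 = (26*p*p*q*q*q*q*q + 82*p*p*p*q*q*q*q + 102*p*p*p*p*q*q*q + 62*p*p*p*p*p*q*q + 16*p*p*p*p*p*p*q)"
  unfolding gL5_def Let_def by (simp add: algebra_simps)

lemma gL_at0_6: "gL6 p q 0 = (44*p*p*q*q*q*q*q*q + 138*p*p*p*q*q*q*q*q + 158*p*p*p*p*q*q*q*q + 78*p*p*p*p*p*q*q*q + 14*p*p*p*p*p*p*q*q)"
  unfolding gL6_def Let_def by (simp add: algebra_simps)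

lemma gL_at0_7: "gL7 p q 0 = (24*p*p*q*q*q*q*q*q*q + 116*p*p*p*q*q*q*q*q*q + 204*p*p*p*p*q*q*q*q*q + 164*p*p*p*p*p*q*q*q*q + 60*p*p*p*p*p*p*q*q*q + 8*p*p*p*p*p*p*p*q*q)"
  unfolding gL7_def Let_def by (simp add: algebra_simps)

lemma elim_pos:
  fixes g g1 :: "real \<Rightarrow> real"
  assumes d: "\<And>x. (g has_real_derivative (g1 x + \<mu> * g x)) (at x)"
    and g0: "g 0 \<ge> 0" and pos: "\<And>x. x > 0 \<Longrightarrow> g1 x > 0" and h: "h > 0"
  shows "g h > 0"
proof -
  define F where "F x = exp (- \<mu> * x) * g x" for x
  have dF: "(F has_real_derivative exp (- \<mu> * x) * g1 x) (at x)" for x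
  proof -
    have "(F has_real_derivative exp (- \<mu> * x) * (- \<mu>) * g x + exp (- \<mu> * x) * (g1 x + \<mu> * g x)) (at x)"
      unfolding F_def by (auto intro!: derivative_eq_intros d)
    then show ?thesis by (simp add: algebra_simps)
  qed
  have cont: "continuous_on {0..h} F"
    using dF by (meson DERIV_continuous continuous_at_imp_continuous_on)
  have "F 0 < F h"
    by (rule DERIV_pos_imp_increasing_open[OF h _ cont]) (metis dF pos exp_gt_zero mult_pos_pos)
  then have "0 < exp (- \<mu> * h) * g h" using g0 by (simp add: F_def)
  then show ?thesis by (simp add: zero_less_mult_iff)
qed

lemma gL_pos:
  fixes p q h :: real
  assumes p: "p > 0" and q: "q > 0" and h: "h > 0"
  shows "gL0 p q h > 0"
proof -
  have g7: "gL7 p q x > 0" for x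
    unfolding gL7_def Let_def using p q by (intro mult_pos_pos add_pos_pos) auto
  have g6: "gL6 p q x > 0" if "x > 0" for x
    by (rule elim_pos[OF gL_step6 _ g7 that]) (unfold gL_at0_6, use p q in \<open>intro add_nonneg_nonneg mult_nonneg_nonneg\<close>, auto)
  have g5: "gL5 p q x > 0" if "x > 0" for x
    by (rule elim_pos[OF gL_step5 _ g6 that]) (unfold gL_at0_5, use p q in \<open>intro add_nonneg_nonneg mult_nonneg_nonneg\<close>, auto)
  have g4: "gL4 p q x > 0" if "x > 0" for x
    by (rule elim_pos[OF gL_step4 _ g5 that]) (unfold gL_at0_4, use p q in \<open>intro add_nonneg_nonneg mult_nonneg_nonneg\<close>, auto)
  have g3: "gL3 p q x > 0" if "x > 0" for x
    by (rule elim_pos[OF gL_step3 _ g4 that]) (unfold gL_at0_3, use p q in \<open>intro add_nonneg_nonneg mult_nonneg_nonneg\<close>, auto)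
  have g2: "gL2 p q x > 0" if "x > 0" for x
    by (rule elim_pos[OF gL_step2 _ g3 that]) (simp add: gL_at0_2)
  have g1: "gL1 p q x > 0" if "x > 0" for x
    by (rule elim_pos[OF gL_step1 _ g2 that]) (simp add: gL_at0_1)
  show ?thesis
    by (rule elim_pos[OF gL_step0 _ g1 h]) (simp add: gL_at0_0)
qed
definition gR0 :: "real \<Rightarrow> real \<Rightarrow> real \<Rightarrow> real" where
  "gR0 p q x = (let P = exp (p*x); R = exp (- q*x); J = Jf p q x in (- 3*q*q + 3*p*p) + (- 12*p*q*q - 12*p*p*q)*J + (- 5*q*q - 5*p*q)*R + (- 6*p*q*q - 6*p*p*q)*R*J + (- p*q - 3*p*p)*R*R + (2*q*q + 5*p*q + 3*p*p)*P + (- 6*p*q*q - 6*p*p*q)*P*J + (2*q*q - 2*p*q)*P*R + (- 3*p*q - 3*p*p)*P*R*R + (q*q + 3*p*q)*P*P + (3*q*q + 3*p*q)*P*P*R)"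

definition gR1 :: "real \<Rightarrow> real \<Rightarrow> real \<Rightarrow> real" where
  "gR1 p q x = (let P = exp (p*x); R = exp (- q*x); J = Jf p q x in (- 6*q*q*q + 6*p*p*q) + (- 24*p*q*q*q - 24*p*p*q*q)*J + (- 5*q*q*q - 5*p*q*q)*R + (- 6*p*q*q*q - 6*p*p*q*q)*R*J + (4*q*q*q + 12*p*q*q + 11*p*p*q + 3*p*p*p)*P + (- 12*p*q*q*q - 18*p*p*q*q - 6*p*p*p*q)*P*J + (2*q*q*q - 12*p*q*q - 14*p*p*q)*P*R + (- 6*p*q*q - 9*p*p*q - 3*p*p*p)*P*R*R + (2*q*q*q + 8*p*q*q + 6*p*p*q)*P*P + (3*q*q*q + 3*p*q*q)*P*P*R)"

definition gR2 :: "real \<Rightarrow> real \<Rightarrow> real \<Rightarrow> real" where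
  "gR2 p q x = (let P = exp (p*x); R = exp (- q*x); J = Jf p q x in (- 6*q*q*q*q + 6*p*p*q*q) + (- 24*p*q*q*q*q - 24*p*p*q*q*q)*J + (4*q*q*q*q + 16*p*q*q*q + 23*p*p*q*q + 14*p*p*p*q + 3*p*p*p*p)*P + (- 12*p*q*q*q*q - 30*p*p*q*q*q - 24*p*p*p*q*q - 6*p*p*p*p*q)*P*J + (- 22*p*q*q*q - 36*p*p*q*q - 14*p*p*p*q)*P*R + (- 3*p*p*q*q - 6*p*p*p*q - 3*p*p*p*p)*P*R*R + (2*q*q*q*q + 12*p*q*q*q + 22*p*p*q*q + 12*p*p*p*q)*P*P + (- 6*p*q*q*q - 12*p*p*q*q - 6*p*p*p*q)*P*P*R)"

definition gR3 :: "real \<Rightarrow> real \<Rightarrow> real \<Rightarrow> real" where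
  "gR3 p q x = (let P = exp (p*x); R = exp (- q*x); J = Jf p q x in (- 12*q*q*q*q*q + 6*p*q*q*q*q + 12*p*p*q*q*q - 6*p*p*p*q*q) + (- 48*p*q*q*q*q*q - 24*p*p*q*q*q*q + 24*p*p*p*q*q*q)*J + (8*q*q*q*q*q + 32*p*q*q*q*q + 46*p*p*q*q*q + 28*p*p*p*q*q + 6*p*p*p*p*q)*P + (- 24*p*q*q*q*q*q - 60*p*p*q*q*q*q - 48*p*p*p*q*q*q - 12*p*p*p*p*q*q)*P*J + (- 46*p*q*q*q*q - 60*p*p*q*q*q - 14*p*p*p*q*q)*P*R + (4*q*q*q*q*q + 26*p*q*q*q*q + 56*p*p*q*q*q + 46*p*p*p*q*q + 12*p*p*p*p*q)*P*P + (- 18*p*q*q*q*q - 48*p*p*q*q*q - 42*p*p*p*q*q - 12*p*p*p*p*q)*P*P*R)"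

definition gR4 :: "real \<Rightarrow> real \<Rightarrow> real \<Rightarrow> real" where
  "gR4 p q x = (let P = exp (p*x); R = exp (- q*x); J = Jf p q x in (8*p*q*q*q*q*q + 32*p*p*q*q*q*q + 46*p*p*p*q*q*q + 28*p*p*p*p*q*q + 6*p*p*p*p*p*q)*P + (- 24*p*p*q*q*q*q*q - 60*p*p*p*q*q*q*q - 48*p*p*p*p*q*q*q - 12*p*p*p*p*p*q*q)*P*J + (- 2*p*q*q*q*q*q - 10*p*p*q*q*q*q - 22*p*p*p*q*q*q - 14*p*p*p*p*q*q)*P*R + (8*p*q*q*q*q*q + 52*p*p*q*q*q*q + 112*p*p*p*q*q*q + 92*p*p*p*p*q*q + 24*p*p*p*p*p*q)*P*P + (- 6*p*q*q*q*q*q - 48*p*p*q*q*q*q - 102*p*p*p*q*q*q - 84*p*p*p*p*q*q - 24*p*p*p*p*p*q)*P*P*R)"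

definition gR5 :: "real \<Rightarrow> real \<Rightarrow> real \<Rightarrow> real" where
  "gR5 p q x = (let P = exp (p*x); R = exp (- q*x); J = Jf p q x in (8*p*q*q*q*q*q*q + 32*p*p*q*q*q*q*q + 46*p*p*p*q*q*q*q + 28*p*p*p*p*q*q*q + 6*p*p*p*p*p*q*q)*P + (- 24*p*p*q*q*q*q*q*q - 60*p*p*p*q*q*q*q*q - 48*p*p*p*p*q*q*q*q - 12*p*p*p*p*p*q*q*q)*P*J + (8*p*q*q*q*q*q*q + 60*p*p*q*q*q*q*q + 164*p*p*p*q*q*q*q + 204*p*p*p*p*q*q*q + 116*p*p*p*p*p*q*q + 24*p*p*p*p*p*p*q)*P*P + (- 30*p*p*q*q*q*q*q - 108*p*p*p*q*q*q*q - 150*p*p*p*p*q*q*q - 96*p*p*p*p*p*q*q - 24*p*p*p*p*p*p*q)*P*P*R)"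

definition gR6 :: "real \<Rightarrow> real \<Rightarrow> real \<Rightarrow> real" where
  "gR6 p q x = (let P = exp (p*x); R = exp (- q*x); J = Jf p q x in (8*p*p*q*q*q*q*q*q + 60*p*p*p*q*q*q*q*q + 164*p*p*p*p*q*q*q*q + 204*p*p*p*p*p*q*q*q + 116*p*p*p*p*p*p*q*q + 24*p*p*p*p*p*p*p*q)*P*P + (6*p*p*q*q*q*q*q*q + 18*p*p*p*q*q*q*q*q - 6*p*p*p*p*q*q*q*q - 66*p*p*p*p*p*q*q*q - 72*p*p*p*p*p*p*q*q - 24*p*p*p*p*p*p*p*q)*P*P*R)"

definition gR7 :: "real \<Rightarrow> real \<Rightarrow> real \<Rightarrow> real" where
  "gR7 p q x = (let P = exp (p*x); R = exp (- q*x); J = Jf p q x in (8*p*p*q*q*q*q*q*q*q + 60*p*p*p*q*q*q*q*q*q + 164*p*p*p*p*q*q*q*q*q + 204*p*p*p*p*p*q*q*q*q + 116*p*p*p*p*p*p*q*q*q + 24*p*p*p*p*p*p*p*q*q)*P*P)"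

lemma gR_step0: "(gR0 p q has_real_derivative (gR1 p q x + (- 2*q) * gR0 p q x)) (at x)"
  unfolding gR0_def gR1_def Let_def
  apply (rule derivative_eq_intros refl)+
  apply (simp add: algebra_simps)
  done

lemma gR_step1: "(gR1 p q has_real_derivative (gR2 p q x + (- q) * gR1 p q x)) (at x)"
  unfolding gR1_def gR2_def Let_def
  apply (rule derivative_eq_intros refl)+
  apply (simp add: algebra_simps)
  done

lemma gR_step2: "(gR2 p q has_real_derivative (gR3 p q x + (p - 2*q) * gR2 p q x)) (at x)"
  unfolding gR2_def gR3_def Let_def
  apply (rule derivative_eq_intros refl)+
  apply (simp add: algebra_simps)
  done

lemma gR_step3: "(gR3 p q has_real_derivative (gR4 p q x + (0) * gR3 p q x)) (at x)"
  unfolding gR3_def gR4_def Let_def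
  apply (rule derivative_eq_intros refl)+
  apply (simp add: algebra_simps)
  done

lemma gR_step4: "(gR4 p q has_real_derivative (gR5 p q x + (p - q) * gR4 p q x)) (at x)"
  unfolding gR4_def gR5_def Let_def
  apply (rule derivative_eq_intros refl)+
  apply (simp add: algebra_simps)
  done

lemma gR_step5: "(gR5 p q has_real_derivative (gR6 p q x + (p) * gR5 p q x)) (at x)"
  unfolding gR5_def gR6_def Let_def
  apply (rule derivative_eq_intros refl)+
  apply (simp add: algebra_simps)
  done

lemma gR_step6: "(gR6 p q has_real_derivative (gR7 p q x + (2*p - q) * gR6 p q x)) (at x)"
  unfolding gR6_def gR7_def Let_def
  apply (rule derivative_eq_intros refl)+
  apply (simp add: algebra_simps)
  done

lemma gR_at0_0: "gR0 p q 0 = 0"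
  unfolding gR0_def Let_def by (simp add: algebra_simps)

lemma gR_at0_1: "gR1 p q 0 = 0"
  unfolding gR1_def Let_def by (simp add: algebra_simps)

lemma gR_at0_2: "gR2 p q 0 = 0"
  unfolding gR2_def Let_def by (simp add: algebra_simps)

lemma gR_at0_3: "gR3 p q 0 = (6*p*p*q*q*q + 12*p*p*p*q*q + 6*p*p*p*p*q)"
  unfolding gR3_def Let_def by (simp add: algebra_simps)

lemma gR_at0_4: "gR4 p q 0 = (8*p*q*q*q*q*q + 26*p*p*q*q*q*q + 34*p*p*p*q*q*q + 22*p*p*p*p*q*q + 6*p*p*p*p*p*q)"
  unfolding gR4_def Let_def by (simp add: algebra_simps)

lemma gR_at0_5: "gR5 p q 0 = (16*p*q*q*q*q*q*q + 62*p*p*q*q*q*q*q + 102*p*p*p*q*q*q*q + 82*p*p*p*p*q*q*q + 26*p*p*p*p*p*q*q)"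
  unfolding gR5_def Let_def by (simp add: algebra_simps)

lemma gR_at0_6: "gR6 p q 0 = (14*p*p*q*q*q*q*q*q + 78*p*p*p*q*q*q*q*q + 158*p*p*p*p*q*q*q*q + 138*p*p*p*p*p*q*q*q + 44*p*p*p*p*p*p*q*q)"
  unfolding gR6_def Let_def by (simp add: algebra_simps)

lemma gR_at0_7: "gR7 p q 0 = (8*p*p*q*q*q*q*q*q*q + 60*p*p*p*q*q*q*q*q*q + 164*p*p*p*p*q*q*q*q*q + 204*p*p*p*p*p*q*q*q*q + 116*p*p*p*p*p*p*q*q*q + 24*p*p*p*p*p*p*p*q*q)"
  unfolding gR7_def Let_def by (simp add: algebra_simps)

lemma gR_pos:
  fixes p q h :: real
  assumes p: "p > 0" and q: "q > 0" and h: "h > 0"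
  shows "gR0 p q h > 0"
proof -
  have g7: "gR7 p q x > 0" for x
    unfolding gR7_def Let_def using p q by (intro mult_pos_pos add_pos_pos) auto
  have g6: "gR6 p q x > 0" if "x > 0" for x
    by (rule elim_pos[OF gR_step6 _ g7 that]) (unfold gR_at0_6, use p q in \<open>intro add_nonneg_nonneg mult_nonneg_nonneg\<close>, auto)
  have g5: "gR5 p q x > 0" if "x > 0" for x
    by (rule elim_pos[OF gR_step5 _ g6 that]) (unfold gR_at0_5, use p q in \<open>intro add_nonneg_nonneg mult_nonneg_nonneg\<close>, auto)
  have g4: "gR4 p q x > 0" if "x > 0" for x
    by (rule elim_pos[OF gR_step4 _ g5 that]) (unfold gR_at0_4, use p q in \<open>intro add_nonneg_nonneg mult_nonneg_nonneg\<close>, auto)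
  have g3: "gR3 p q x > 0" if "x > 0" for x
    by (rule elim_pos[OF gR_step3 _ g4 that]) (unfold gR_at0_3, use p q in \<open>intro add_nonneg_nonneg mult_nonneg_nonneg\<close>, auto)
  have g2: "gR2 p q x > 0" if "x > 0" for x
    by (rule elim_pos[OF gR_step2 _ g3 that]) (simp add: gR_at0_2)
  have g1: "gR1 p q x > 0" if "x > 0" for x
    by (rule elim_pos[OF gR_step1 _ g2 that]) (simp add: gR_at0_1)
  show ?thesis
    by (rule elim_pos[OF gR_step0 _ g1 h]) (simp add: gR_at0_0)
qed


definition ph0 :: "real \<Rightarrow> real \<Rightarrow> real \<Rightarrow> real \<Rightarrow> real \<Rightarrow> real" where
  "ph0 l1 l2 t u x = (exp (l1*(u-t)) * exp (l2*(x-t)) - exp (l2*(u-t)) * exp (l1*(x-t))) / (exp (l1*(u-t)) - exp (l2*(u-t)))"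

definition ph1 :: "real \<Rightarrow> real \<Rightarrow> real \<Rightarrow> real \<Rightarrow> real \<Rightarrow> real" where
  "ph1 l1 l2 t u x = (exp (l1*(x-t)) - exp (l2*(x-t))) / (exp (l1*(u-t)) - exp (l2*(u-t)))"

lemma ftc_real:
  fixes F f :: "real \<Rightarrow> real"
  assumes "a \<le> b" "\<And>x. (F has_real_derivative f x) (at x)"
  shows "(f has_integral F b - F a) {a..b}"
  by (rule fundamental_theorem_of_calculus[OF assms(1)])
     (use assms(2) in \<open>auto simp: has_real_derivative_iff_has_vector_derivative[symmetric] intro: has_field_derivative_at_within\<close>)

lemma Jf_deriv_shift[derivative_intros]:
  "D = exp (p*(x-t)) * exp (- q*(x-t)) \<Longrightarrow> ((\<lambda>x. Jf p q (x - t)) has_real_derivative D) (at x within S)"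
proof -
  assume D: "D = exp (p*(x-t)) * exp (- q*(x-t))"
  have "((\<lambda>x. Jf p q (x - t)) has_real_derivative exp (p*(x-t)) * exp (- q*(x-t)) * 1) (at x within S)"
    by (rule DERIV_chain2[OF Jf_deriv]) (auto intro!: derivative_eq_intros)
  then show ?thesis using D by simp
qed

lemma local_ineqs:
  fixes p q t u :: real
  assumes p: "p > 0" and q: "q > 0" and tu: "t < u"
  shows "integral {t..u} (\<lambda>x. ph0 p (- q) t u x * ph0 p (- q) t u x)
           - integral {t..u} (\<lambda>x. ph0 p (- q) t u x * ph1 p (- q) t u x)
         > p / (3 * (p + q)) * integral {t..u} (ph0 p (- q) t u)"
    and "integral {t..u} (\<lambda>x. ph1 p (- q) t u x * ph1 p (- q) t u x)
           - integral {t..u} (\<lambda>x. ph0 p (- q) t u x * ph1 p (- q) t u x)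
         > q / (3 * (p + q)) * integral {t..u} (ph1 p (- q) t u)"
proof -
  define P where "P = exp (p*(u-t))"
  define R where "R = exp (- q*(u-t))"
  define J where "J = Jf p q (u-t)"
  define Dn where "Dn = P - R"
  have P1: "P > 1" unfolding P_def using p tu by simp
  have R1: "R < 1" "R > 0" unfolding R_def using q tu by auto
  have Dn: "Dn > 0" unfolding Dn_def using P1 R1 by simp
  have PDn: "P = Dn + R" unfolding Dn_def by simp
  have pqnz: "p + q \<noteq> 0" using p q by simp
  have PRnz: "P - R \<noteq> 0" using P1 R1 by simp
  have ph0_eq: "ph0 p (- q) t u x = (P * exp (- q*(x-t)) - R * exp (p*(x-t))) / Dn" for x
    unfolding ph0_def P_def R_def Dn_def by simp
  have ph1_eq: "ph1 p (- q) t u x = (exp (p*(x-t)) - exp (- q*(x-t))) / Dn" for x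
    unfolding ph1_def P_def R_def Dn_def by simp
  have "((\<lambda>x. ph0 p (- q) t u x) has_integral
      (P * exp (- q*(u-t)) / (- q) - R * exp (p*(u-t)) / p) / Dn - (P * exp (- q*(t-t)) / (- q) - R * exp (p*(t-t)) / p) / Dn) {t..u}"
    unfolding ph0_eq
    apply (rule ftc_real[where F = "\<lambda>x. (P * exp (- q*(x-t)) / (- q) - R * exp (p*(x-t)) / p) / Dn"])
    using tu apply simp
    using p q Dn by (auto intro!: derivative_eq_intros simp: field_simps)
  then have I0: "integral {t..u} (ph0 p (- q) t u) = (P * R / (- q) - R * P / p) / Dn - (P / (- q) - R / p) / Dn"
    unfolding P_def[symmetric] R_def[symmetric] by (simp add: integral_unique)
  have "((\<lambda>x. ph1 p (- q) t u x) has_integral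
      (exp (p*(u-t)) / p - exp (- q*(u-t)) / (- q)) / Dn - (exp (p*(t-t)) / p - exp (- q*(t-t)) / (- q)) / Dn) {t..u}"
    unfolding ph1_eq
    apply (rule ftc_real[where F = "\<lambda>x. (exp (p*(x-t)) / p - exp (- q*(x-t)) / (- q)) / Dn"])
    using tu apply simp
    using p q Dn by (auto intro!: derivative_eq_intros simp: field_simps)
  then have I1: "integral {t..u} (ph1 p (- q) t u) = (P / p - R / (- q)) / Dn - (1 / p - 1 / (- q)) / Dn"
    unfolding P_def[symmetric] R_def[symmetric] by (simp add: integral_unique)
  have "((\<lambda>x. ph0 p (- q) t u x * ph0 p (- q) t u x) has_integral
      (P*P * exp (- q*(u-t)) * exp (- q*(u-t)) / (- 2*q) - 2*P*R* Jf p q (u-t) + R*R*exp (p*(u-t)) * exp (p*(u-t)) / (2*p)) / (Dn*Dn)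
    - (P*P * exp (- q*(t-t)) * exp (- q*(t-t)) / (- 2*q) - 2*P*R* Jf p q (t-t) + R*R*exp (p*(t-t)) * exp (p*(t-t)) / (2*p)) / (Dn*Dn)) {t..u}"
    unfolding ph0_eq
    apply (rule ftc_real[where F = "\<lambda>x. (P*P * exp (- q*(x-t)) * exp (- q*(x-t)) / (- 2*q) - 2*P*R* Jf p q (x-t) + R*R*exp (p*(x-t)) * exp (p*(x-t)) / (2*p)) / (Dn*Dn)"])
    using tu apply simp
    using p q Dn by (auto intro!: derivative_eq_intros simp: field_simps exp_diff exp_minus)
  then have Aa: "integral {t..u} (\<lambda>x. ph0 p (- q) t u x * ph0 p (- q) t u x) =
     (P*P*R*R / (- 2*q) - 2*P*R*J + R*R*P*P / (2*p)) / (Dn*Dn) - (P*P / (- 2*q) + R*R / (2*p)) / (Dn*Dn)"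
    unfolding P_def[symmetric] R_def[symmetric] J_def[symmetric] by (simp add: integral_unique)
  have "((\<lambda>x. ph1 p (- q) t u x * ph1 p (- q) t u x) has_integral
      (exp (p*(u-t)) * exp (p*(u-t)) / (2*p) - 2 * Jf p q (u-t) + exp (- q*(u-t)) * exp (- q*(u-t)) / (- 2*q)) / (Dn*Dn)
    - (exp (p*(t-t)) * exp (p*(t-t)) / (2*p) - 2 * Jf p q (t-t) + exp (- q*(t-t)) * exp (- q*(t-t)) / (- 2*q)) / (Dn*Dn)) {t..u}"
    unfolding ph1_eq
    apply (rule ftc_real[where F = "\<lambda>x. (exp (p*(x-t)) * exp (p*(x-t)) / (2*p) - 2 * Jf p q (x-t) + exp (- q*(x-t)) * exp (- q*(x-t)) / (- 2*q)) / (Dn*Dn)"])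
    using tu apply simp
    using p q Dn by (auto intro!: derivative_eq_intros simp: field_simps exp_diff exp_minus)
  then have Ab: "integral {t..u} (\<lambda>x. ph1 p (- q) t u x * ph1 p (- q) t u x) =
     (P*P / (2*p) - 2*J + R*R / (- 2*q)) / (Dn*Dn) - (1 / (2*p) + 1 / (- 2*q)) / (Dn*Dn)"
    unfolding P_def[symmetric] R_def[symmetric] J_def[symmetric] by (simp add: integral_unique)
  have "((\<lambda>x. ph0 p (- q) t u x * ph1 p (- q) t u x) has_integral
      ((P + R) * Jf p q (u-t) - P * exp (- q*(u-t)) * exp (- q*(u-t)) / (- 2*q) - R * exp (p*(u-t)) * exp (p*(u-t)) / (2*p)) / (Dn*Dn)
    - ((P + R) * Jf p q (t-t) - P * exp (- q*(t-t)) * exp (- q*(t-t)) / (- 2*q) - R * exp (p*(t-t)) * exp (p*(t-t)) / (2*p)) / (Dn*Dn)) {t..u}"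
    unfolding ph0_eq ph1_eq
    apply (rule ftc_real[where F = "\<lambda>x. ((P + R) * Jf p q (x-t) - P * exp (- q*(x-t)) * exp (- q*(x-t)) / (- 2*q) - R * exp (p*(x-t)) * exp (p*(x-t)) / (2*p)) / (Dn*Dn)"])
    using tu apply simp
    using p q Dn by (auto intro!: derivative_eq_intros simp: field_simps exp_diff exp_minus)
  then have Bb: "integral {t..u} (\<lambda>x. ph0 p (- q) t u x * ph1 p (- q) t u x) =
     ((P + R) * J - P*R*R / (- 2*q) - R*P*P / (2*p)) / (Dn*Dn) - (- P / (- 2*q) - R / (2*p)) / (Dn*Dn)"
    unfolding P_def[symmetric] R_def[symmetric] J_def[symmetric] by (simp add: integral_unique)
  have nzs: "p \<noteq> 0" "q \<noteq> 0" "Dn \<noteq> 0" using p q Dn by auto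
  have Aa': "Dn*Dn*integral {t..u} (\<lambda>x. ph0 p (- q) t u x * ph0 p (- q) t u x) =
     (P*P*R*R / (- 2*q) - 2*P*R*J + R*R*P*P / (2*p)) - (P*P / (- 2*q) + R*R / (2*p))"
    unfolding Aa using nzs by (simp add: field_simps)
  have Ab': "Dn*Dn*integral {t..u} (\<lambda>x. ph1 p (- q) t u x * ph1 p (- q) t u x) =
     (P*P / (2*p) - 2*J + R*R / (- 2*q)) - (1 / (2*p) + 1 / (- 2*q))"
    unfolding Ab using nzs by (simp add: field_simps)
  have Bb': "Dn*Dn*integral {t..u} (\<lambda>x. ph0 p (- q) t u x * ph1 p (- q) t u x) =
     ((P + R) * J - P*R*R / (- 2*q) - R*P*P / (2*p)) - (- P / (- 2*q) - R / (2*p))"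
    unfolding Bb using nzs by (simp add: field_simps)
  have I0': "Dn * integral {t..u} (ph0 p (- q) t u) = (P * R / (- q) - R * P / p) - (P / (- q) - R / p)"
    unfolding I0 using nzs by (simp add: field_simps)
  have I1': "Dn * integral {t..u} (ph1 p (- q) t u) = (P / p - R / (- q)) - (1 / p - 1 / (- q))"
    unfolding I1 using nzs by (simp add: field_simps)
  have GL: "gL0 p q (u-t) = 6*p*q*(p+q)*(Dn*Dn) * (integral {t..u} (\<lambda>x. ph0 p (- q) t u x * ph0 p (- q) t u x)
           - integral {t..u} (\<lambda>x. ph0 p (- q) t u x * ph1 p (- q) t u x)
         - p / (3 * (p + q)) * integral {t..u} (ph0 p (- q) t u))"
  proof -
    have "6*p*q*(p+q)*(Dn*Dn) * (integral {t..u} (\<lambda>x. ph0 p (- q) t u x * ph0 p (- q) t u x)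
           - integral {t..u} (\<lambda>x. ph0 p (- q) t u x * ph1 p (- q) t u x)
         - p / (3 * (p + q)) * integral {t..u} (ph0 p (- q) t u))
      = 6*p*q*(p+q)*(Dn*Dn*integral {t..u} (\<lambda>x. ph0 p (- q) t u x * ph0 p (- q) t u x))
        - 6*p*q*(p+q)*(Dn*Dn*integral {t..u} (\<lambda>x. ph0 p (- q) t u x * ph1 p (- q) t u x))
        - 2*p*p*q*Dn*(Dn * integral {t..u} (ph0 p (- q) t u))"
      using pqnz by (simp add: field_simps)
    also have "\<dots> = gL0 p q (u-t)"
      unfolding Aa' Bb' I0' unfolding gL0_def Let_def P_def[symmetric] R_def[symmetric] J_def[symmetric] Dn_def
      using nzs by (simp add: field_simps) 
    finally show ?thesis by simp
  qed
  have GR: "gR0 p q (u-t) = 6*p*q*(p+q)*(Dn*Dn) * (integral {t..u} (\<lambda>x. ph1 p (- q) t u x * ph1 p (- q) t u x)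
           - integral {t..u} (\<lambda>x. ph0 p (- q) t u x * ph1 p (- q) t u x)
         - q / (3 * (p + q)) * integral {t..u} (ph1 p (- q) t u))"
  proof -
    have "6*p*q*(p+q)*(Dn*Dn) * (integral {t..u} (\<lambda>x. ph1 p (- q) t u x * ph1 p (- q) t u x)
           - integral {t..u} (\<lambda>x. ph0 p (- q) t u x * ph1 p (- q) t u x)
         - q / (3 * (p + q)) * integral {t..u} (ph1 p (- q) t u))
      = 6*p*q*(p+q)*(Dn*Dn*integral {t..u} (\<lambda>x. ph1 p (- q) t u x * ph1 p (- q) t u x))
        - 6*p*q*(p+q)*(Dn*Dn*integral {t..u} (\<lambda>x. ph0 p (- q) t u x * ph1 p (- q) t u x))
        - 2*p*q*q*Dn*(Dn * integral {t..u} (ph1 p (- q) t u))"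
      using pqnz by (simp add: field_simps)
    also have "\<dots> = gR0 p q (u-t)"
      unfolding Ab' Bb' I1' unfolding gR0_def Let_def P_def[symmetric] R_def[symmetric] J_def[symmetric] Dn_def
      using nzs by (simp add: field_simps) 
    finally show ?thesis by simp
  qed
  have pos: "6*p*q*(p+q)*(Dn*Dn) > 0" using p q Dn by simp
  show "integral {t..u} (\<lambda>x. ph0 p (- q) t u x * ph0 p (- q) t u x)
           - integral {t..u} (\<lambda>x. ph0 p (- q) t u x * ph1 p (- q) t u x)
         > p / (3 * (p + q)) * integral {t..u} (ph0 p (- q) t u)"
  proof -
    have "0 < gL0 p q (u-t)" using gL_pos[OF p q, of "u-t"] tu by simp
    then have "0 < 6*p*q*(p+q)*(Dn*Dn) * (integral {t..u} (\<lambda>x. ph0 p (- q) t u x * ph0 p (- q) t u x)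
           - integral {t..u} (\<lambda>x. ph0 p (- q) t u x * ph1 p (- q) t u x)
         - p / (3 * (p + q)) * integral {t..u} (ph0 p (- q) t u))" unfolding GL .
    from zero_less_mult_pos[OF this pos] show ?thesis by simp
  qed
  show "integral {t..u} (\<lambda>x. ph1 p (- q) t u x * ph1 p (- q) t u x)
           - integral {t..u} (\<lambda>x. ph0 p (- q) t u x * ph1 p (- q) t u x)
         > q / (3 * (p + q)) * integral {t..u} (ph1 p (- q) t u)"
  proof -
    have "0 < gR0 p q (u-t)" using gR_pos[OF p q, of "u-t"] tu by simp
    then have "0 < 6*p*q*(p+q)*(Dn*Dn) * (integral {t..u} (\<lambda>x. ph1 p (- q) t u x * ph1 p (- q) t u x)
           - integral {t..u} (\<lambda>x. ph0 p (- q) t u x * ph1 p (- q) t u x)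
         - q / (3 * (p + q)) * integral {t..u} (ph1 p (- q) t u))" unfolding GR .
    from zero_less_mult_pos[OF this pos] show ?thesis by simp
  qed
qed


lemma ph_den_pos:
  fixes l1 l2 t u :: real
  assumes "l1 > 0" "l2 < 0" "t < u"
  shows "exp (l1*(u-t)) - exp (l2*(u-t)) > 0"
proof -
  have "l1 - l2 > 0" "u - t > 0" using assms by auto
  then have "(l1 - l2)*(u-t) > 0" by (rule mult_pos_pos)
  then have "l2*(u-t) < l1*(u-t)" by (simp add: algebra_simps)
  then show ?thesis by simp
qed

lemma ph0_alt:
  assumes "l1 > 0" "l2 < 0" "t < u"
  shows "ph0 l1 l2 t u x = (exp (l1*u) * exp (l2*x) - exp (l2*u) * exp (l1*x)) / (exp (l1*u) * exp (l2*t) - exp (l2*u) * exp (l1*t))"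
proof -
  have k: "exp (l1*t) * exp (l2*t) > 0" by simp
  have "ph0 l1 l2 t u x = ((exp (l1*(u-t)) * exp (l2*(x-t)) - exp (l2*(u-t)) * exp (l1*(x-t))) * (exp (l1*t) * exp (l2*t))) /
        ((exp (l1*(u-t)) - exp (l2*(u-t))) * (exp (l1*t) * exp (l2*t)))"
    unfolding ph0_def using k by simp
  also have "\<dots> = (exp (l1*u) * exp (l2*x) - exp (l2*u) * exp (l1*x)) / (exp (l1*u) * exp (l2*t) - exp (l2*u) * exp (l1*t))"
    by (simp add: algebra_simps exp_diff)
  finally show ?thesis .
qed

lemma ph1_alt:
  assumes "l1 > 0" "l2 < 0" "t < u"
  shows "ph1 l1 l2 t u x = (exp (l1*x) * exp (l2*t) - exp (l2*x) * exp (l1*t)) / (exp (l1*u) * exp (l2*t) - exp (l2*u) * exp (l1*t))"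
proof -
  have k: "exp (l1*t) * exp (l2*t) > 0" by simp
  have "ph1 l1 l2 t u x = ((exp (l1*(x-t)) - exp (l2*(x-t))) * (exp (l1*t) * exp (l2*t))) /
        ((exp (l1*(u-t)) - exp (l2*(u-t))) * (exp (l1*t) * exp (l2*t)))"
    unfolding ph1_def using k by simp
  also have "\<dots> = (exp (l1*x) * exp (l2*t) - exp (l2*x) * exp (l1*t)) / (exp (l1*u) * exp (l2*t) - exp (l2*u) * exp (l1*t))"
    by (simp add: algebra_simps exp_diff)
  finally show ?thesis .
qed

lemma ph_den2_pos:
  fixes l1 l2 t u :: real
  assumes "l1 > 0" "l2 < 0" "t < u"
  shows "exp (l1*u) * exp (l2*t) - exp (l2*u) * exp (l1*t) > 0"
proof -
  have "l2*u + l1*t < l1*u + l2*t"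
  proof -
    have "l1 - l2 > 0" "u - t > 0" using assms by auto
    then have "(l1 - l2) * (u - t) > 0" by (rule mult_pos_pos)
    then show ?thesis by (simp add: algebra_simps)
  qed
  then have "exp (l2*u + l1*t) < exp (l1*u + l2*t)" by simp
  then show ?thesis by (simp add: exp_add)
qed

lemma ph_rep:
  assumes "l1 > 0" "l2 < 0" "t < u"
    and g: "\<And>x. x \<in> {t..u} \<Longrightarrow> g x = c1 * exp (l1*x) + c2 * exp (l2*x)"
    and x: "x \<in> {t..u}"
  shows "g x = g t * ph0 l1 l2 t u x + g u * ph1 l1 l2 t u x"
proof -
  have "t \<in> {t..u}" "u \<in> {t..u}" using assms by auto
  note gg = g[OF this(1)] g[OF this(2)] g[OF x]
  have d: "exp (l1*u) * exp (l2*t) - exp (l2*u) * exp (l1*t) \<noteq> 0"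
    using ph_den2_pos[OF assms(1-3)] by simp
  show ?thesis unfolding gg ph0_alt[OF assms(1-3)] ph1_alt[OF assms(1-3)]
    using d apply (simp add: divide_simps)
    by algebra
qed

lemma ph0_span:
  assumes "l1 > 0" "l2 < 0" "t < u"
  shows "\<exists>c1 c2. \<forall>x. ph0 l1 l2 t u x = c1 * exp (l1*x) + c2 * exp (l2*x)"
proof -
  define D where "D = exp (l1*u) * exp (l2*t) - exp (l2*u) * exp (l1*t)"
  show ?thesis
    by (rule exI[of _ "- exp (l2*u) / D"], rule exI[of _ "exp (l1*u) / D"])
       (simp add: ph0_alt[OF assms] D_def[symmetric] diff_divide_distrib)
qed

lemma ph1_span:
  assumes "l1 > 0" "l2 < 0" "t < u"
  shows "\<exists>c1 c2. \<forall>x. ph1 l1 l2 t u x = c1 * exp (l1*x) + c2 * exp (l2*x)"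
proof -
  define D where "D = exp (l1*u) * exp (l2*t) - exp (l2*u) * exp (l1*t)"
  have Dn: "D \<noteq> 0" unfolding D_def using ph_den2_pos[OF assms] by simp
  show ?thesis
    apply (rule exI[of _ "exp (l2*t) / D"], rule exI[of _ "- exp (l1*t) / D"], intro allI)
    using Dn unfolding D_def by (simp add: ph1_alt[OF assms] diff_divide_distrib mult.commute)
qed

lemma ph_vals:
  assumes "l1 > 0" "l2 < 0" "t < u"
  shows "ph0 l1 l2 t u t = 1" "ph0 l1 l2 t u u = 0" "ph1 l1 l2 t u t = 0" "ph1 l1 l2 t u u = 1"
  using ph_den_pos[OF assms] by (auto simp: ph0_def ph1_def)

lemma ph_bounds:
  assumes l: "l1 > 0" "l2 < 0" "t < u" and x: "x \<in> {t..u}"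
  shows "0 \<le> ph0 l1 l2 t u x" "ph0 l1 l2 t u x \<le> 1" "0 \<le> ph1 l1 l2 t u x" "ph1 l1 l2 t u x \<le> 1"
proof -
  have D: "exp (l1*(u-t)) - exp (l2*(u-t)) > 0" by (rule ph_den_pos[OF l])
  have w0: "x - t \<ge> 0" and wh: "x - t \<le> u - t" using x by auto
  have "l2*(u-t) + l1*(x-t) \<le> l1*(u-t) + l2*(x-t)"
  proof -
    have "(l1 - l2) * ((u-t) - (x-t)) \<ge> 0" using l wh by simp
    then show ?thesis by (simp add: algebra_simps)
  qed
  then have "exp (l2*(u-t)) * exp (l1*(x-t)) \<le> exp (l1*(u-t)) * exp (l2*(x-t))"
    by (simp add: exp_add[symmetric])
  then show "0 \<le> ph0 l1 l2 t u x" unfolding ph0_def using D by simp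
  have a1: "exp (l2*(x-t)) \<le> 1" using l w0 by (simp add: mult_nonpos_nonneg)
  have a2: "1 \<le> exp (l1*(x-t))" using l w0 by simp
  have "exp (l1*(u-t)) * exp (l2*(x-t)) \<le> exp (l1*(u-t))" using a1 by simp
  moreover have "exp (l2*(u-t)) \<le> exp (l2*(u-t)) * exp (l1*(x-t))" using a2 by simp
  ultimately have "exp (l1*(u-t)) * exp (l2*(x-t)) - exp (l2*(u-t)) * exp (l1*(x-t)) \<le> exp (l1*(u-t)) - exp (l2*(u-t))"
    by linarith
  then show "ph0 l1 l2 t u x \<le> 1" unfolding ph0_def using D by (simp add: divide_le_eq_1)
  have "l2*(x-t) \<le> l1*(x-t)" using l w0 by (intro mult_right_mono) auto
  then show "0 \<le> ph1 l1 l2 t u x" unfolding ph1_def using D by simp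
  have "exp (l1*(x-t)) \<le> exp (l1*(u-t))" using l wh by simp
  moreover have "exp (l2*(u-t)) \<le> exp (l2*(x-t))" using l wh by (simp add: mult_left_mono_neg)
  ultimately have "exp (l1*(x-t)) - exp (l2*(x-t)) \<le> exp (l1*(u-t)) - exp (l2*(u-t))"
    by linarith
  then show "ph1 l1 l2 t u x \<le> 1" unfolding ph1_def using D by (simp add: divide_le_eq_1)
qed

lemma ph_cont:
  assumes "l1 > 0" "l2 < 0" "t < u"
  shows "continuous_on S (ph0 l1 l2 t u)" "continuous_on S (ph1 l1 l2 t u)"
  unfolding ph0_def ph1_def using ph_den_pos[OF assms] by (auto intro!: continuous_intros)


definition trow :: "nat \<Rightarrow> (nat\<Rightarrow>real) \<Rightarrow> (nat\<Rightarrow>real) \<Rightarrow> (nat \<Rightarrow> real) \<Rightarrow> nat \<Rightarrow> real" where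
  "trow n d e v j = d j * v j + (if 0 < j then e (j-1) * v (j-1) else 0) + (if Suc j < n then e j * v (Suc j) else 0)"

definition offs :: "nat \<Rightarrow> (nat\<Rightarrow>real) \<Rightarrow> nat \<Rightarrow> real" where
  "offs n e j = (if 0 < j then e (j-1) else 0) + (if Suc j < n then e j else 0)"

lemma tridiag_exists:
  "(\<forall>j<n. 0 \<le> e j) \<Longrightarrow> (\<forall>j<n. offs n e j < d j) \<Longrightarrow> \<exists>v. \<forall>j<n. trow n d e v j = b j"
proof (induction n arbitrary: d e b)
  case 0
  then show ?case by simp
next
  case (Suc n)
  show ?case
  proof (cases "n = 0")
    case True
    have "d 0 > 0" using Suc.prems(2) True by (auto simp: offs_def)
    then show ?thesis using True
      by (intro exI[of _ "\<lambda>_. b 0 / d 0"]) (auto simp: trow_def)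
  next
    case False
    have e0: "0 \<le> e 0" using Suc.prems(1) by auto
    have d0: "e 0 < d 0" using Suc.prems(2)[rule_format, of 0] False by (auto simp: offs_def)
    have d1: "e 0 + (if Suc (Suc 0) < Suc n then e 1 else 0) < d 1"
      using Suc.prems(2)[rule_format, of 1] False by (auto simp: offs_def)
    have d0p: "d 0 > 0" using e0 d0 by linarith
    have ee: "e 0 * e 0 / d 0 \<le> e 0"
      using e0 d0 d0p by (simp add: divide_le_eq mult_left_mono)
    define d' where "d' j = (if j = 0 then d 1 - e 0 * e 0 / d 0 else d (Suc j))" for j
    define e' where "e' j = e (Suc j)" for j
    define b' where "b' j = (if j = 0 then b 1 - e 0 * b 0 / d 0 else b (Suc j))" for j
    have h1: "\<forall>j<n. 0 \<le> e' j" using Suc.prems(1) by (auto simp: e'_def)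
    have h2: "\<forall>j<n. offs n e' j < d' j"
    proof (intro allI impI)
      fix j assume j: "j < n"
      show "offs n e' j < d' j"
      proof (cases "j = 0")
        case True
        then show ?thesis using d1 ee by (auto simp: offs_def d'_def e'_def)
      next
        case False
        have "offs (Suc n) e (Suc j) < d (Suc j)" using Suc.prems(2) j by auto
        then show ?thesis using False by (auto simp: offs_def d'_def e'_def)
      qed
    qed
    obtain v' where v': "\<forall>j<n. trow n d' e' v' j = b' j" using Suc.IH[OF h1 h2] by blast
    define v where "v j = (if j = 0 then (b 0 - e 0 * v' 0) / d 0 else v' (j-1))" for j
    have "\<forall>j<Suc n. trow (Suc n) d e v j = b j"
    proof (intro allI impI)
      fix j assume j: "j < Suc n"
      show "trow (Suc n) d e v j = b j"
      proof (cases j)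
        case 0
        then show ?thesis using False d0p by (simp add: trow_def v_def field_simps)
      next
        case (Suc k)
        then have k: "k < n" using j by simp
        show ?thesis
        proof (cases "k = 0")
          case True
          have "trow n d' e' v' 0 = b' 0" using v' False by auto
          then show ?thesis using Suc True d0p
            by (simp add: trow_def v_def d'_def e'_def b'_def field_simps split: if_splits)
        next
          case False
          have "trow n d' e' v' k = b' k" using v' k by auto
          then show ?thesis using Suc False
            by (auto simp: trow_def v_def d'_def e'_def b'_def split: if_splits)
        qed
      qed
    qed
    then show ?thesis by blast
  qed
qed

lemma tridiag_bound:
  fixes c :: real
  assumes e: "\<forall>j<n. 0 \<le> e j" and sol: "\<forall>j<n. trow n d e v j = b j"
    and br: "\<forall>j<n. \<bar>b j\<bar> \<le> r j" and dom: "\<forall>j<n. c * r j < d j - offs n e j"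
    and c: "c > 0" and j: "j < n"
  shows "\<bar>v j\<bar> \<le> 1 / c"
proof -
  have ne: "(\<lambda>i. \<bar>v i\<bar>) ` {..<n} \<noteq> {}" using j by auto
  obtain k where k: "k < n" and kmax: "\<And>i. i < n \<Longrightarrow> \<bar>v i\<bar> \<le> \<bar>v k\<bar>"
  proof -
    let ?M = "Max ((\<lambda>i. \<bar>v i\<bar>) ` {..<n})"
    have "?M \<in> (\<lambda>i. \<bar>v i\<bar>) ` {..<n}" using ne by (intro Max_in) auto
    then obtain k where "k < n" "\<bar>v k\<bar> = ?M" by auto
    moreover have "\<And>i. i < n \<Longrightarrow> \<bar>v i\<bar> \<le> ?M" by (intro Max_ge) auto
    ultimately show ?thesis using that by metis
  qed
  have ek: "0 \<le> (if 0 < k then e (k-1) else 0)" "0 \<le> (if Suc k < n then e k else 0)"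
    using e k by auto
  have t1: "\<bar>(if 0 < k then e (k-1) * v (k-1) else 0)\<bar> \<le> (if 0 < k then e (k-1) else 0) * \<bar>v k\<bar>"
  proof (cases "0 < k")
    case True
    have "\<bar>e (k-1) * v (k-1)\<bar> = e (k-1) * \<bar>v (k-1)\<bar>" using e k by (simp add: abs_mult)
    also have "\<dots> \<le> e (k-1) * \<bar>v k\<bar>" using kmax[of "k-1"] k e by (intro mult_left_mono) auto
    finally show ?thesis using True by simp
  qed simp
  have t2: "\<bar>(if Suc k < n then e k * v (Suc k) else 0)\<bar> \<le> (if Suc k < n then e k else 0) * \<bar>v k\<bar>"
  proof (cases "Suc k < n")
    case True
    have "\<bar>e k * v (Suc k)\<bar> = e k * \<bar>v (Suc k)\<bar>" using e k by (simp add: abs_mult)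
    also have "\<dots> \<le> e k * \<bar>v k\<bar>" using kmax[of "Suc k"] True e k by (intro mult_left_mono) auto
    finally show ?thesis using True by simp
  qed simp
  have rk: "\<bar>b k\<bar> \<le> r k" using br k by auto
  have dk: "c * r k < d k - offs n e k" using dom k by auto
  have r0: "0 \<le> r k" using rk by linarith
  have pos: "d k - offs n e k > 0" using dk r0 c by (smt (verit) mult_nonneg_nonneg)
  define X where "X = (if 0 < k then e (k-1) * v (k-1) else 0)"
  define Y where "Y = (if Suc k < n then e k * v (Suc k) else 0)"
  define eL where "eL = (if 0 < k then e (k-1) else 0)"
  define eR where "eR = (if Suc k < n then e k else 0)"
  have of: "offs n e k = eL + eR" unfolding offs_def eL_def eR_def by simp
  have eq: "d k * v k = b k - X - Y"
    using sol k unfolding X_def Y_def by (simp add: trow_def algebra_simps)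
  have "\<bar>d k * v k\<bar> \<le> \<bar>b k\<bar> + \<bar>X\<bar> + \<bar>Y\<bar>" unfolding eq by linarith
  moreover have "\<bar>X\<bar> \<le> eL * \<bar>v k\<bar>" "\<bar>Y\<bar> \<le> eR * \<bar>v k\<bar>"
    using t1 t2 unfolding X_def Y_def eL_def eR_def by auto
  ultimately have "\<bar>d k * v k\<bar> \<le> \<bar>b k\<bar> + offs n e k * \<bar>v k\<bar>"
    unfolding of by (simp add: distrib_right)
  moreover have "\<bar>d k * v k\<bar> = d k * \<bar>v k\<bar>" using pos ek unfolding offs_def by (simp add: abs_mult)
  ultimately have "(d k - offs n e k) * \<bar>v k\<bar> \<le> r k" using rk by (simp add: algebra_simps)
  then have "c * ((d k - offs n e k) * \<bar>v k\<bar>) < d k - offs n e k"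
    using dk c by (smt (verit) mult_left_mono)
  then have "(c * \<bar>v k\<bar>) * (d k - offs n e k) < 1 * (d k - offs n e k)" by (simp add: algebra_simps)
  then have "c * \<bar>v k\<bar> < 1" using mult_less_cancel_right_pos[OF pos] by blast
  then have "\<bar>v k\<bar> \<le> 1 / c" using c by (simp add: field_simps)
  then show ?thesis using kmax[OF j] by linarith
qed


locale spl =
  fixes l1 l2 :: real and ts :: "real list"
  assumes l1: "0 < l1" and l2: "l2 < 0" and len: "2 \<le> length ts" and srt: "sorted_wrt (<) ts"
begin

definition m :: nat where "m = length ts - 1"

lemma len_m: "length ts = Suc m" and m_pos: "1 \<le> m"
  using len unfolding m_def by auto

lemma T_less: "i < j \<Longrightarrow> j \<le> m \<Longrightarrow> ts!i < ts!j"
  using sorted_wrt_nth_less[OF srt] len_m by auto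

lemma T_le: "i \<le> j \<Longrightarrow> j \<le> m \<Longrightarrow> ts!i \<le> ts!j"
  using T_less by (cases "i = j") (auto simp: less_imp_le)

lemma T_step: "i < m \<Longrightarrow> ts!i < ts!(Suc i)"
  using T_less by auto

definition P0 :: "nat \<Rightarrow> real \<Rightarrow> real" where "P0 i = ph0 l1 l2 (ts!i) (ts!Suc i)"
definition P1 :: "nat \<Rightarrow> real \<Rightarrow> real" where "P1 i = ph1 l1 l2 (ts!i) (ts!Suc i)"

lemma P_vals: "i < m \<Longrightarrow> P0 i (ts!i) = 1" "i < m \<Longrightarrow> P0 i (ts!Suc i) = 0"
  "i < m \<Longrightarrow> P1 i (ts!i) = 0" "i < m \<Longrightarrow> P1 i (ts!Suc i) = 1"
  unfolding P0_def P1_def using ph_vals[OF l1 l2 T_step] by auto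

lemma P_cont: "i < m \<Longrightarrow> continuous_on S (P0 i)" "i < m \<Longrightarrow> continuous_on S (P1 i)"
  unfolding P0_def P1_def using ph_cont[OF l1 l2 T_step] by auto

lemma P_bounds:
  assumes "i < m" "x \<in> {ts!i..ts!Suc i}"
  shows "0 \<le> P0 i x" "P0 i x \<le> 1" "0 \<le> P1 i x" "P1 i x \<le> 1"
  unfolding P0_def P1_def using ph_bounds[OF l1 l2 T_step[OF assms(1)] assms(2)] by auto

definition sv :: "(nat \<Rightarrow> real) \<Rightarrow> real \<Rightarrow> real" where
  "sv v x = (\<Sum>i<m. if ts!i \<le> x \<and> x < ts!Suc i then v i * P0 i x + v (Suc i) * P1 i x else 0)
            + (if x = ts!m then v m else 0)"

lemma sv_half:
  assumes j: "j < m" and x: "ts!j \<le> x" "x < ts!Suc j"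
  shows "sv v x = v j * P0 j x + v (Suc j) * P1 j x"
proof -
  let ?F = "\<lambda>i. if ts!i \<le> x \<and> x < ts!Suc i then v i * P0 i x + v (Suc i) * P1 i x else 0"
  have z: "?F i = 0" if "i < m" "i \<noteq> j" for i
  proof (cases "i < j")
    case True
    then have "ts!Suc i \<le> ts!j" using j by (intro T_le) auto
    then show ?thesis using x by auto
  next
    case False
    then have "ts!Suc j \<le> ts!i" using that j by (intro T_le) auto
    then show ?thesis using x by auto
  qed
  have "(\<Sum>i<m. ?F i) = ?F j + (\<Sum>i\<in>{..<m} - {j}. ?F i)"
    using j by (intro sum.remove) auto
  also have "(\<Sum>i\<in>{..<m} - {j}. ?F i) = 0" using z by (intro sum.neutral) auto
  finally have s: "(\<Sum>i<m. ?F i) = ?F j" by simp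
  have "x < ts!m" using x j T_le[of "Suc j" m] by auto
  then show ?thesis unfolding sv_def s using x by simp
qed

lemma sv_end: "sv v (ts!m) = v m"
proof -
  have "(\<Sum>i<m. if ts!i \<le> ts!m \<and> ts!m < ts!Suc i then v i * P0 i (ts!m) + v (Suc i) * P1 i (ts!m) else 0) = 0"
  proof (intro sum.neutral ballI)
    fix i assume "i \<in> {..<m}"
    then have "ts!Suc i \<le> ts!m" by (intro T_le) auto
    then show "(if ts!i \<le> ts!m \<and> ts!m < ts!Suc i then v i * P0 i (ts!m) + v (Suc i) * P1 i (ts!m) else 0) = 0"
      by auto
  qed
  then show ?thesis unfolding sv_def by simp
qed

lemma sv_on:
  assumes i: "i < m" and x: "ts!i \<le> x" "x \<le> ts!Suc i"
  shows "sv v x = v i * P0 i x + v (Suc i) * P1 i x"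
proof (cases "x < ts!Suc i")
  case True
  then show ?thesis using sv_half[OF i x(1)] by simp
next
  case False
  then have xe: "x = ts!Suc i" using x by simp
  show ?thesis
  proof (cases "Suc i < m")
    case True
    have "sv v x = v (Suc i) * P0 (Suc i) x + v (Suc (Suc i)) * P1 (Suc i) x"
      using sv_half[OF True, of x] xe T_step[OF True] by simp
    then show ?thesis using P_vals[OF True] P_vals[OF i] xe by simp
  next
    case False
    then have "Suc i = m" using i by simp
    then show ?thesis using sv_end P_vals[OF i] xe by simp
  qed
qed

lemma sv_out: "x < ts!0 \<or> ts!m < x \<Longrightarrow> sv v x = 0"
proof -
  assume x: "x < ts!0 \<or> ts!m < x"
  have "(\<Sum>i<m. if ts!i \<le> x \<and> x < ts!Suc i then v i * P0 i (x) + v (Suc i) * P1 i (x) else 0) = 0"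
  proof (intro sum.neutral ballI)
    fix i assume "i \<in> {..<m}"
    then have "ts!0 \<le> ts!i" "ts!Suc i \<le> ts!m" by (auto intro!: T_le)
    then show "(if ts!i \<le> x \<and> x < ts!Suc i then v i * P0 i (x) + v (Suc i) * P1 i (x) else 0) = 0"
      using x by auto
  qed
  moreover have "x \<noteq> ts!m" using x T_le[of 0 m] by auto
  ultimately show ?thesis unfolding sv_def by simp
qed

lemma cover:
  assumes "ts!0 \<le> x" "x \<le> ts!m"
  shows "\<exists>i<m. ts!i \<le> x \<and> x \<le> ts!Suc i"
proof -
  define S where "S = {i. i < m \<and> ts!i \<le> x}"
  have fin: "finite S" unfolding S_def by auto
  have "0 \<in> S" unfolding S_def using assms m_pos by auto
  then have ne: "S \<noteq> {}" by auto
  define i where "i = Max S"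
  have iS: "i \<in> S" unfolding i_def using fin ne by (rule Max_in)
  have imax: "\<And>k. k \<in> S \<Longrightarrow> k \<le> i" unfolding i_def using fin by auto
  have "x \<le> ts!Suc i"
  proof (rule ccontr)
    assume "\<not> x \<le> ts!Suc i"
    then have lt: "ts!Suc i < x" by simp
    show False
    proof (cases "Suc i < m")
      case True
      then have "Suc i \<in> S" unfolding S_def using lt by auto
      then show False using imax by fastforce
    next
      case False
      then have "Suc i = m" using iS unfolding S_def by auto
      then show False using lt assms by simp
    qed
  qed
  then show ?thesis using iS unfolding S_def by auto
qed

lemma interval_Union: "{ts!0..ts!m} = (\<Union>i\<in>{..<m}. {ts!i..ts!Suc i})"
proof
  show "{ts!0..ts!m} \<subseteq> (\<Union>i\<in>{..<m}. {ts!i..ts!Suc i})"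
    using cover by fastforce
  show "(\<Union>i\<in>{..<m}. {ts!i..ts!Suc i}) \<subseteq> {ts!0..ts!m}"
  proof
    fix x assume "x \<in> (\<Union>i\<in>{..<m}. {ts!i..ts!Suc i})"
    then obtain i where i: "i < m" "ts!i \<le> x" "x \<le> ts!Suc i" by auto
    have "ts!0 \<le> ts!i" "ts!Suc i \<le> ts!m" using i by (auto intro!: T_le)
    then show "x \<in> {ts!0..ts!m}" using i by auto
  qed
qed

lemma cont_pieces:
  assumes "\<And>i. i < m \<Longrightarrow> continuous_on {ts!i..ts!Suc i} g"
  shows "continuous_on {ts!0..ts!m} g"
  unfolding interval_Union by (rule continuous_on_closed_Union) (use assms in auto)

lemma sv_cont: "continuous_on {ts!0..ts!m} (sv v)"
proof (rule cont_pieces)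
  fix i assume i: "i < m"
  have "continuous_on {ts!i..ts!Suc i} (\<lambda>x. v i * P0 i x + v (Suc i) * P1 i x)"
    using P_cont[OF i] by (intro continuous_intros) auto
  then show "continuous_on {ts!i..ts!Suc i} (sv v)"
    by (rule continuous_on_eq) (use sv_on[OF i] in auto)
qed

lemma int_split:
  fixes f :: "real \<Rightarrow> real"
  assumes f: "f integrable_on {ts!0..ts!m}"
  shows "integral {ts!0..ts!m} f = (\<Sum>i<m. integral {ts!i..ts!Suc i} f)"
proof -
  have "k \<le> m \<Longrightarrow> integral {ts!0..ts!k} f = (\<Sum>i<k. integral {ts!i..ts!Suc i} f)" for k
  proof (induction k)
    case 0
    then show ?case using integral_refl[of "ts!0" f] by (simp add: cbox_interval)
  next
    case (Suc k)
    have sub: "{ts!0..ts!Suc k} \<subseteq> {ts!0..ts!m}" using Suc.prems by (auto dest: T_le[of "Suc k" m])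
    have fi: "f integrable_on {ts!0..ts!Suc k}" using integrable_on_subinterval[OF f sub] .
    have "integral {ts!0..ts!k} f + integral {ts!k..ts!Suc k} f = integral {ts!0..ts!Suc k} f"
      by (rule Henstock_Kurzweil_Integration.integral_combine[OF _ _ fi]) (use Suc.prems in \<open>auto intro!: T_le\<close>)
    then show ?case using Suc by simp
  qed
  then show ?thesis by simp
qed

end

lemma reindex_sum:
  fixes G X Y :: "nat \<Rightarrow> real"
  shows "(\<Sum>i<m. G i * X i + G (Suc i) * Y i) =
         (\<Sum>j<Suc m. G j * ((if j < m then X j else 0) + (if 0 < j then Y (j-1) else 0)))"
proof -
  have a: "(\<Sum>j<Suc m. G j * (if j < m then X j else 0)) = (\<Sum>i<m. G i * X i)"
    by (simp add: sum.lessThan_Suc)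
  have b: "(\<Sum>j<Suc m. G j * (if 0 < j then Y (j-1) else 0)) = (\<Sum>i<m. G (Suc i) * Y i)"
    by (subst sum.lessThan_Suc_shift) simp
  show ?thesis unfolding distrib_left sum.distrib a b ..
qed

context spl
begin

lemma sv_spline: "sv v \<in> L_splines l1 l2 a b ts" if "a = ts!0" "b = ts!m"
  unfolding L_splines_def mem_Collect_eq
proof (intro conjI allI impI)
  show "continuous_on {a..b} (sv v)" using sv_cont that by simp
  fix i assume "Suc i < length ts"
  then have i: "i < m" using len_m by simp
  obtain c1 c2 where c: "\<forall>x. P0 i x = c1 * exp (l1*x) + c2 * exp (l2*x)"
    using ph0_span[OF l1 l2 T_step[OF i]] unfolding P0_def by blast
  obtain d1 d2 where d: "\<forall>x. P1 i x = d1 * exp (l1*x) + d2 * exp (l2*x)"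
    using ph1_span[OF l1 l2 T_step[OF i]] unfolding P1_def by blast
  show "\<exists>c1 c2. \<forall>x\<in>{ts!i..ts!Suc i}. sv v x = c1 * exp (l1 * x) + c2 * exp (l2 * x)"
    by (rule exI[of _ "v i * c1 + v (Suc i) * d1"], rule exI[of _ "v i * c2 + v (Suc i) * d2"])
       (use sv_on[OF i] c d in \<open>auto simp: algebra_simps\<close>)
qed

lemma spline_rep:
  assumes g: "g \<in> L_splines l1 l2 a b ts" and i: "i < m" and x: "x \<in> {ts!i..ts!Suc i}"
  shows "g x = g (ts!i) * P0 i x + g (ts!Suc i) * P1 i x"
proof -
  have "Suc i < length ts" using i len_m by simp
  then obtain c1 c2 where c: "\<forall>x\<in>{ts!i..ts!Suc i}. g x = c1 * exp (l1 * x) + c2 * exp (l2 * x)"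
    using g unfolding L_splines_def by blast
  show ?thesis unfolding P0_def P1_def
    by (rule ph_rep[OF l1 l2 T_step[OF i]]) (use c x in auto)
qed

definition c0 :: real where "c0 = min l1 (- l2) / (3 * (l1 - l2))"

lemma c0_pos: "c0 > 0" unfolding c0_def using l1 l2 by auto

definition "A0 i = integral {ts!i..ts!Suc i} (\<lambda>x. P0 i x * P0 i x)"
definition "A1 i = integral {ts!i..ts!Suc i} (\<lambda>x. P1 i x * P1 i x)"
definition "BB i = integral {ts!i..ts!Suc i} (\<lambda>x. P0 i x * P1 i x)"
definition "J0 i = integral {ts!i..ts!Suc i} (P0 i)"
definition "J1 i = integral {ts!i..ts!Suc i} (P1 i)"

lemma local_facts:
  assumes i: "i < m"
  shows "A0 i - BB i > c0 * J0 i" "A1 i - BB i > c0 * J1 i" "0 \<le> BB i" "0 \<le> J0 i" "0 \<le> J1 i"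
proof -
  have tu: "ts!i < ts!Suc i" using T_step[OF i] .
  have q: "- l2 > 0" using l2 by simp
  note LI = local_ineqs[OF l1 q tu, simplified]
  have Pn: "x \<in> {ts!i..ts!Suc i} \<Longrightarrow> 0 \<le> P0 i x" "x \<in> {ts!i..ts!Suc i} \<Longrightarrow> 0 \<le> P1 i x" for x
    using P_bounds[OF i] by auto
  have int: "(\<lambda>x. P0 i x * P1 i x) integrable_on {ts!i..ts!Suc i}" "P0 i integrable_on {ts!i..ts!Suc i}"
    "P1 i integrable_on {ts!i..ts!Suc i}"
    using P_cont[OF i] by (auto intro!: integrable_continuous_interval continuous_intros)
  show J0: "0 \<le> J0 i" unfolding J0_def by (rule integral_nonneg[OF int(2)]) (use Pn in auto)
  show J1: "0 \<le> J1 i" unfolding J1_def by (rule integral_nonneg[OF int(3)]) (use Pn in auto)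
  show "0 \<le> BB i" unfolding BB_def by (rule integral_nonneg[OF int(1)]) (use Pn in auto)
  have c1: "c0 \<le> l1 / (3 * (l1 - l2))" unfolding c0_def
    by (rule divide_right_mono) (use l1 l2 in auto)
  have c2: "c0 \<le> - l2 / (3 * (l1 - l2))" unfolding c0_def
    by (rule divide_right_mono) (use l1 l2 in auto)
  have "c0 * J0 i \<le> l1 / (3 * (l1 - l2)) * J0 i" using c1 J0 by (rule mult_right_mono)
  then show "A0 i - BB i > c0 * J0 i" using LI(1) unfolding A0_def BB_def J0_def P0_def P1_def by simp
  have "c0 * J1 i \<le> - l2 / (3 * (l1 - l2)) * J1 i" using c2 J1 by (rule mult_right_mono)
  then show "A1 i - BB i > c0 * J1 i" using LI(2) unfolding A1_def BB_def J1_def P0_def P1_def by simp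
qed


definition "F0 f i = integral {ts!i..ts!Suc i} (\<lambda>x. f x * P0 i x)"
definition "F1 f i = integral {ts!i..ts!Suc i} (\<lambda>x. f x * P1 i x)"
definition "dd j = (if 0 < j then A1 (j-1) else 0) + (if j < m then A0 j else 0)"
definition "bb f j = (if 0 < j then F1 f (j-1) else 0) + (if j < m then F0 f j else 0)"
definition "EE j = (if j < m then BB j else 0)"
definition "rr j = (if 0 < j then J1 (j-1) else 0) + (if j < m then J0 j else 0)"

lemma sub_int: "i < m \<Longrightarrow> {ts!i..ts!Suc i} \<subseteq> {ts!0..ts!m}"
proof -
  assume i: "i < m"
  have "ts!0 \<le> ts!i" "ts!Suc i \<le> ts!m" using i by (auto intro!: T_le)
  then show ?thesis by auto
qed

lemma contI: "i < m \<Longrightarrow> continuous_on {ts!0..ts!m} f \<Longrightarrow> continuous_on {ts!i..ts!Suc i} f"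
proof -
  assume i: "i < m" and f: "continuous_on {ts!0..ts!m} f"
  have "ts!0 \<le> ts!i" "ts!Suc i \<le> ts!m" using i by (auto intro!: T_le)
  then have "{ts!i..ts!Suc i} \<subseteq> {ts!0..ts!m}" by auto
  then show ?thesis using f by (rule continuous_on_subset[rotated])
qed

lemma int_fg:
  assumes f: "continuous_on {ts!0..ts!m} f" and g: "g \<in> L_splines l1 l2 (ts!0) (ts!m) ts" and i: "i < m"
  shows "integral {ts!i..ts!Suc i} (\<lambda>x. f x * g x) = g (ts!i) * F0 f i + g (ts!Suc i) * F1 f i"
proof -
  have fi: "continuous_on {ts!i..ts!Suc i} f" using contI[OF i f] .
  have "integral {ts!i..ts!Suc i} (\<lambda>x. f x * g x) =
        integral {ts!i..ts!Suc i} (\<lambda>x. g (ts!i) * (f x * P0 i x) + g (ts!Suc i) * (f x * P1 i x))"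
    by (rule integral_cong) (subst spline_rep[OF g i], auto simp: algebra_simps)
  also have "\<dots> = integral {ts!i..ts!Suc i} (\<lambda>x. g (ts!i) * (f x * P0 i x)) + integral {ts!i..ts!Suc i} (\<lambda>x. g (ts!Suc i) * (f x * P1 i x))"
    by (rule integral_add) (use fi P_cont[OF i] in \<open>auto intro!: integrable_continuous_interval continuous_intros\<close>)
  finally show ?thesis unfolding F0_def F1_def integral_mult_right .
qed

lemma int_svg:
  assumes g: "g \<in> L_splines l1 l2 (ts!0) (ts!m) ts" and i: "i < m"
  shows "integral {ts!i..ts!Suc i} (\<lambda>x. sv v x * g x) =
     g (ts!i) * (v i * A0 i + v (Suc i) * BB i) + g (ts!Suc i) * (v i * BB i + v (Suc i) * A1 i)"
proof -
  let ?I = "{ts!i..ts!Suc i}"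
  have c: "continuous_on ?I (P0 i)" "continuous_on ?I (P1 i)" using P_cont[OF i] by auto
  have "integral ?I (\<lambda>x. sv v x * g x) =
        integral ?I (\<lambda>x. (g (ts!i) * v i) * (P0 i x * P0 i x) + (g (ts!i) * v (Suc i) + g (ts!Suc i) * v i) * (P0 i x * P1 i x)
          + (g (ts!Suc i) * v (Suc i)) * (P1 i x * P1 i x))"
    by (rule integral_cong) (subst spline_rep[OF g i], simp, subst sv_on[OF i], auto simp: algebra_simps)
  also have "\<dots> = (g (ts!i) * v i) * A0 i + (g (ts!i) * v (Suc i) + g (ts!Suc i) * v i) * BB i + (g (ts!Suc i) * v (Suc i)) * A1 i"
    unfolding A0_def A1_def BB_def
    by (subst integral_add, use c in \<open>auto intro!: integrable_continuous_interval continuous_intros\<close>)+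
  finally show ?thesis by (simp add: algebra_simps)
qed

lemma orth:
  assumes f: "continuous_on {ts!0..ts!m} f"
    and v: "\<forall>j<Suc m. trow (Suc m) dd EE v j = bb f j"
    and g: "g \<in> L_splines l1 l2 (ts!0) (ts!m) ts"
  shows "integral {ts!0..ts!m} (\<lambda>x. f x * g x) = integral {ts!0..ts!m} (\<lambda>x. sv v x * g x)"
proof -
  have gc: "continuous_on {ts!0..ts!m} g" using g unfolding L_splines_def by simp
  have i1: "(\<lambda>x. f x * g x) integrable_on {ts!0..ts!m}"
    using f gc by (auto intro!: integrable_continuous_interval continuous_intros)
  have i2: "(\<lambda>x. sv v x * g x) integrable_on {ts!0..ts!m}"
    using sv_cont gc by (auto intro!: integrable_continuous_interval continuous_intros)
  define G where "G j = g (ts!j)" for j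
  define X where "X i = F0 f i - v i * A0 i - v (Suc i) * BB i" for i
  define Y where "Y i = F1 f i - v i * BB i - v (Suc i) * A1 i" for i
  have "integral {ts!0..ts!m} (\<lambda>x. f x * g x) - integral {ts!0..ts!m} (\<lambda>x. sv v x * g x)
     = (\<Sum>i<m. integral {ts!i..ts!Suc i} (\<lambda>x. f x * g x) - integral {ts!i..ts!Suc i} (\<lambda>x. sv v x * g x))"
    unfolding int_split[OF i1] int_split[OF i2] sum_subtractf ..
  also have "\<dots> = (\<Sum>i<m. G i * X i + G (Suc i) * Y i)"
  proof (rule sum.cong)
    fix i assume "i \<in> {..<m}"
    then have i: "i < m" by simp
    show "integral {ts!i..ts!Suc i} (\<lambda>x. f x * g x) - integral {ts!i..ts!Suc i} (\<lambda>x. sv v x * g x) = G i * X i + G (Suc i) * Y i"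
      unfolding int_fg[OF f g i] int_svg[OF g i] G_def X_def Y_def by (simp add: algebra_simps)
  qed simp
  also have "\<dots> = (\<Sum>j<Suc m. G j * ((if j < m then X j else 0) + (if 0 < j then Y (j-1) else 0)))"
    by (rule reindex_sum)
  also have "\<dots> = (\<Sum>j<Suc m. G j * (bb f j - trow (Suc m) dd EE v j))"
  proof (rule sum.cong)
    fix j assume j: "j \<in> {..<Suc m}"
    have "(if j < m then X j else 0) + (if 0 < j then Y (j-1) else 0) = bb f j - trow (Suc m) dd EE v j"
    proof (cases "0 < j")
      case True
      then have jj: "Suc (j - 1) = j" by simp
      show ?thesis using True jj j
        by (cases "j < m") (simp_all add: X_def Y_def bb_def trow_def dd_def EE_def algebra_simps)
    next
      case False
      then have "j = 0" by simp
      then show ?thesis using m_pos by (simp add: X_def Y_def bb_def trow_def dd_def EE_def algebra_simps)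
    qed
    then show "G j * ((if j < m then X j else 0) + (if 0 < j then Y (j-1) else 0)) = G j * (bb f j - trow (Suc m) dd EE v j)"
      by simp
  qed simp
  also have "\<dots> = 0" using v by (intro sum.neutral) auto
  finally show ?thesis by simp
qed


lemma F_bound:
  assumes f: "continuous_on {ts!0..ts!m} f" and fb: "\<forall>x\<in>{ts!0..ts!m}. \<bar>f x\<bar> \<le> 1" and i: "i < m"
  shows "\<bar>F0 f i\<bar> \<le> J0 i" "\<bar>F1 f i\<bar> \<le> J1 i"
proof -
  let ?I = "{ts!i..ts!Suc i}"
  have fi: "continuous_on ?I f" using contI[OF i f] .
  have sub: "?I \<subseteq> {ts!0..ts!m}" using sub_int[OF i] .
  have fb': "\<bar>f x\<bar> \<le> 1" if "x \<in> ?I" for x using fb sub that by auto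
  note c = P_cont[OF i]
  have int: "(\<lambda>x. f x * P0 i x) integrable_on ?I" "(\<lambda>x. f x * P1 i x) integrable_on ?I"
    "P0 i integrable_on ?I" "P1 i integrable_on ?I" "(\<lambda>x. - P0 i x) integrable_on ?I" "(\<lambda>x. - P1 i x) integrable_on ?I"
    using fi c by (auto intro!: integrable_continuous_interval continuous_intros)
  have pb: "\<bar>f x * P0 i x\<bar> \<le> P0 i x" "\<bar>f x * P1 i x\<bar> \<le> P1 i x" if "x \<in> ?I" for x
  proof -
    have "0 \<le> P0 i x" "0 \<le> P1 i x" using P_bounds[OF i that] by auto
    then show "\<bar>f x * P0 i x\<bar> \<le> P0 i x" "\<bar>f x * P1 i x\<bar> \<le> P1 i x"
      using fb'[OF that] by (auto simp: abs_mult intro: mult_left_le_one_le mult_right_le_one_le)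
  qed
  have q0: "f x * P0 i x \<le> P0 i x" "- P0 i x \<le> f x * P0 i x" if "x \<in> ?I" for x
    using pb(1)[OF that] by (auto simp: abs_le_iff)
  have q1: "f x * P1 i x \<le> P1 i x" "- P1 i x \<le> f x * P1 i x" if "x \<in> ?I" for x
    using pb(2)[OF that] by (auto simp: abs_le_iff)
  have "F0 f i \<le> J0 i" unfolding F0_def J0_def
    by (rule integral_le[OF int(1) int(3)]) (use q0 in blast)
  moreover have "- J0 i \<le> F0 f i" unfolding F0_def J0_def integral_neg[of _ "P0 i", symmetric]
    by (rule integral_le[OF int(5) int(1)]) (use q0 in blast)
  ultimately show "\<bar>F0 f i\<bar> \<le> J0 i" by simp
  have "F1 f i \<le> J1 i" unfolding F1_def J1_def
    by (rule integral_le[OF int(2) int(4)]) (use q1 in blast)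
  moreover have "- J1 i \<le> F1 f i" unfolding F1_def J1_def integral_neg[of _ "P1 i", symmetric]
    by (rule integral_le[OF int(6) int(2)]) (use q1 in blast)
  ultimately show "\<bar>F1 f i\<bar> \<le> J1 i" by simp
qed

lemma dom:
  assumes j: "j < Suc m"
  shows "c0 * rr j < dd j - offs (Suc m) EE j"
proof -
  have eq: "dd j - offs (Suc m) EE j = (if 0 < j then A1 (j-1) - BB (j-1) else 0) + (if j < m then A0 j - BB j else 0)"
    unfolding dd_def offs_def EE_def using j by auto
  show ?thesis
  proof (cases "0 < j")
    case True
    then have a: "c0 * J1 (j-1) < A1 (j-1) - BB (j-1)" using local_facts(2)[of "j-1"] j by simp
    show ?thesis
    proof (cases "j < m")
      case True
      then have "c0 * J0 j < A0 j - BB j" using local_facts(1) by simp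
      then show ?thesis using a \<open>0 < j\<close> True unfolding eq rr_def by (simp add: distrib_left)
    next
      case False
      then show ?thesis using a \<open>0 < j\<close> unfolding eq rr_def by simp
    qed
  next
    case False
    then have "j = 0" by simp
    then have "j < m" using m_pos by simp
    then have "c0 * J0 j < A0 j - BB j" using local_facts(1) by simp
    then show ?thesis using False \<open>j < m\<close> unfolding eq rr_def by simp
  qed
qed

lemma exists_sol: "\<exists>v. \<forall>j<Suc m. trow (Suc m) dd EE v j = bb f j"
proof (rule tridiag_exists)
  show "\<forall>j<Suc m. 0 \<le> EE j" unfolding EE_def using local_facts(3) by auto
  show "\<forall>j<Suc m. offs (Suc m) EE j < dd j"
  proof (intro allI impI)
    fix j assume j: "j < Suc m"
    have "0 \<le> rr j" unfolding rr_def using local_facts(4,5) j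
      by (auto intro!: add_nonneg_nonneg)
    then have "0 \<le> c0 * rr j" using c0_pos by simp
    then show "offs (Suc m) EE j < dd j" using dom[OF j] by simp
  qed
qed


lemma spline_diff:
  assumes "s1 \<in> L_splines l1 l2 a b ts" "s2 \<in> L_splines l1 l2 a b ts"
  shows "(\<lambda>x. s1 x - s2 x) \<in> L_splines l1 l2 a b ts"
proof -
  have A0: "continuous_on {a..b} s1 \<and> (\<forall>i. Suc i < length ts \<longrightarrow> (\<exists>c1 c2. \<forall>x\<in>{ts!i..ts!Suc i}. s1 x = c1 * exp (l1 * x) + c2 * exp (l2 * x)))"
    using assms(1) unfolding L_splines_def mem_Collect_eq .
  have B0: "continuous_on {a..b} s2 \<and> (\<forall>i. Suc i < length ts \<longrightarrow> (\<exists>c1 c2. \<forall>x\<in>{ts!i..ts!Suc i}. s2 x = c1 * exp (l1 * x) + c2 * exp (l2 * x)))"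
    using assms(2) unfolding L_splines_def mem_Collect_eq .
  note A = conjunct1[OF A0] conjunct2[OF A0]
  note B = conjunct1[OF B0] conjunct2[OF B0]
  have C: "\<exists>c1 c2. \<forall>x\<in>{ts!i..ts!Suc i}. s1 x - s2 x = c1 * exp (l1 * x) + c2 * exp (l2 * x)"
    if i: "Suc i < length ts" for i
  proof -
    obtain c1 c2 where c: "\<forall>x\<in>{ts!i..ts!Suc i}. s1 x = c1 * exp (l1 * x) + c2 * exp (l2 * x)"
      using A(2) i by blast
    obtain d1 d2 where d: "\<forall>x\<in>{ts!i..ts!Suc i}. s2 x = d1 * exp (l1 * x) + d2 * exp (l2 * x)"
      using B(2) i by blast
    have "\<forall>x\<in>{ts!i..ts!Suc i}. s1 x - s2 x = (c1 - d1) * exp (l1 * x) + (c2 - d2) * exp (l2 * x)"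
    proof
      fix x assume "x \<in> {ts!i..ts!Suc i}"
      then show "s1 x - s2 x = (c1 - d1) * exp (l1 * x) + (c2 - d2) * exp (l2 * x)"
        using c d by (simp add: algebra_simps)
    qed
    then show ?thesis by blast
  qed
  have "continuous_on {a..b} (\<lambda>x. s1 x - s2 x)" using A(1) B(1) by (rule continuous_on_diff)
  then show ?thesis unfolding L_splines_def mem_Collect_eq using C by blast
qed

lemma proj_unique:
  assumes p1: "is_spline_proj l1 l2 (ts!0) (ts!m) ts f s1" and p2: "is_spline_proj l1 l2 (ts!0) (ts!m) ts f s2"
    and z1: "\<forall>x. x \<notin> {ts!0..ts!m} \<longrightarrow> s1 x = 0" and z2: "\<forall>x. x \<notin> {ts!0..ts!m} \<longrightarrow> s2 x = 0"
  shows "s1 = s2"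
proof -
  let ?I = "{ts!0..ts!m}"
  have P1: "s1 \<in> L_splines l1 l2 (ts!0) (ts!m) ts \<and> (\<forall>g \<in> L_splines l1 l2 (ts!0) (ts!m) ts. integral ?I (\<lambda>x. f x * g x) = integral ?I (\<lambda>x. s1 x * g x))"
    using p1 unfolding is_spline_proj_def .
  note s1 = conjunct1[OF P1] and o1 = conjunct2[OF P1]
  have P2: "s2 \<in> L_splines l1 l2 (ts!0) (ts!m) ts \<and> (\<forall>g \<in> L_splines l1 l2 (ts!0) (ts!m) ts. integral ?I (\<lambda>x. f x * g x) = integral ?I (\<lambda>x. s2 x * g x))"
    using p2 unfolding is_spline_proj_def .
  note s2 = conjunct1[OF P2] and o2 = conjunct2[OF P2]
  define w where "w x = s1 x - s2 x" for x
  have w: "w \<in> L_splines l1 l2 (ts!0) (ts!m) ts" unfolding w_def by (rule spline_diff[OF s1 s2])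
  have c1: "continuous_on ?I s1" using s1 unfolding L_splines_def by simp
  have c2: "continuous_on ?I s2" using s2 unfolding L_splines_def by simp
  have cw: "continuous_on ?I w" using w unfolding L_splines_def by simp
  have e1: "integral ?I (\<lambda>x. f x * w x) = integral ?I (\<lambda>x. s1 x * w x)" using o1 w by blast
  have e2: "integral ?I (\<lambda>x. f x * w x) = integral ?I (\<lambda>x. s2 x * w x)" using o2 w by blast
  have i1: "(\<lambda>x. s1 x * w x) integrable_on ?I"
    by (rule integrable_continuous_interval) (intro continuous_on_mult c1 cw)
  have i2: "(\<lambda>x. s2 x * w x) integrable_on ?I"
    by (rule integrable_continuous_interval) (intro continuous_on_mult c2 cw)
  have "integral ?I (\<lambda>x. w x * w x) = integral ?I (\<lambda>x. s1 x * w x - s2 x * w x)"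
    by (rule integral_cong) (simp add: w_def algebra_simps)
  also have "\<dots> = integral ?I (\<lambda>x. s1 x * w x) - integral ?I (\<lambda>x. s2 x * w x)"
    by (rule integral_diff[OF i1 i2])
  also have "\<dots> = 0" using e1 e2 by simp
  finally have z: "integral ?I (\<lambda>x. w x * w x) = 0" .
  have lt: "ts!0 < ts!m" using T_less[of 0 m] m_pos by simp
  have cww: "continuous_on ?I (\<lambda>x. w x * w x)" by (intro continuous_on_mult cw)
  have "(integral ?I (\<lambda>x. w x * w x) = 0) = (\<forall>x\<in>?I. w x * w x = 0)"
    by (rule integral_eq_0_iff[OF cww lt]) simp
  then have ww: "\<forall>x\<in>?I. w x * w x = 0" using z by simp
  show ?thesis
  proof
    fix x
    show "s1 x = s2 x"
    proof (cases "x \<in> ?I")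
      case True
      then have "w x = 0" using ww by simp
      then show ?thesis unfolding w_def by simp
    next
      case False
      then show ?thesis using z1 z2 by simp
    qed
  qed
qed

lemma main_bound:
  fixes f :: "real \<Rightarrow> real"
  assumes f: "continuous_on {ts!0..ts!m} f" and fb: "\<forall>x\<in>{ts!0..ts!m}. \<bar>f x\<bar> \<le> 1"
    and x: "x \<in> {ts!0..ts!m}"
  shows "\<bar>spline_proj l1 l2 (ts!0) (ts!m) ts f x\<bar> \<le> 2 / c0"
proof -
  obtain v where v: "\<forall>j<Suc m. trow (Suc m) dd EE v j = bb f j" using exists_sol by blast
  have proj: "is_spline_proj l1 l2 (ts!0) (ts!m) ts f (sv v)"
    unfolding is_spline_proj_def using sv_spline orth[OF f v] by auto
  have zero: "\<forall>x. x \<notin> {ts!0..ts!m} \<longrightarrow> sv v x = 0"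
    using sv_out by auto
  have eqS: "spline_proj l1 l2 (ts!0) (ts!m) ts f = sv v"
    unfolding spline_proj_def
  proof (rule the_equality)
    show "is_spline_proj l1 l2 (ts!0) (ts!m) ts f (sv v) \<and> (\<forall>x. x \<notin> {ts!0..ts!m} \<longrightarrow> sv v x = 0)"
      using proj zero by simp
    fix s assume "is_spline_proj l1 l2 (ts!0) (ts!m) ts f s \<and> (\<forall>x. x \<notin> {ts!0..ts!m} \<longrightarrow> s x = 0)"
    then show "s = sv v" using proj_unique[OF _ proj _ zero] by blast
  qed
  have vb: "\<bar>v j\<bar> \<le> 1 / c0" if "j < Suc m" for j
  proof (rule tridiag_bound[where r = rr])
    show "\<forall>j<Suc m. 0 \<le> EE j" unfolding EE_def using local_facts(3) by auto
    show "\<forall>j<Suc m. trow (Suc m) dd EE v j = bb f j" using v .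
    show "\<forall>j<Suc m. \<bar>bb f j\<bar> \<le> rr j"
    proof (intro allI impI)
      fix j assume j: "j < Suc m"
      have a: "\<bar>(if 0 < j then F1 f (j-1) else 0)\<bar> \<le> (if 0 < j then J1 (j-1) else 0)"
        using F_bound(2)[OF f fb, of "j-1"] j by auto
      have b: "\<bar>(if j < m then F0 f j else 0)\<bar> \<le> (if j < m then J0 j else 0)"
        using F_bound(1)[OF f fb, of j] by auto
      show "\<bar>bb f j\<bar> \<le> rr j" unfolding bb_def rr_def using a b by linarith
    qed
    show "\<forall>j<Suc m. c0 * rr j < dd j - offs (Suc m) EE j" using dom by auto
  qed (simp_all add: c0_pos that)
  obtain i where i: "i < m" "ts!i \<le> x" "x \<le> ts!Suc i" using cover x by auto
  have xi: "x \<in> {ts!i..ts!Suc i}" using i by auto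
  have "\<bar>sv v x\<bar> = \<bar>v i * P0 i x + v (Suc i) * P1 i x\<bar>" using sv_on[OF i] by simp
  also have "\<dots> \<le> \<bar>v i * P0 i x\<bar> + \<bar>v (Suc i) * P1 i x\<bar>" by (rule abs_triangle_ineq)
  also have "\<dots> = \<bar>v i\<bar> * P0 i x + \<bar>v (Suc i)\<bar> * P1 i x"
    using P_bounds[OF i(1) xi] by (simp add: abs_mult)
  also have "\<dots> \<le> 1 / c0 * 1 + 1 / c0 * 1"
  proof (rule add_mono)
    have "0 < 1 / c0" using c0_pos by simp
    show "\<bar>v i\<bar> * P0 i x \<le> 1 / c0 * 1"
      by (rule mult_mono) (use P_bounds[OF i(1) xi] vb[of i] i c0_pos in auto)
    show "\<bar>v (Suc i)\<bar> * P1 i x \<le> 1 / c0 * 1"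
      by (rule mult_mono) (use P_bounds[OF i(1) xi] vb[of "Suc i"] i c0_pos in auto)
  qed
  finally show ?thesis unfolding eqS by simp
qed

end

theorem mainTheorem2:
  fixes l1 l2 :: real
  assumes "l1 > 0" and "l2 < 0"
  shows "\<exists>C::real. \<forall>a b ts. is_partition a b ts \<longrightarrow>
           (\<forall>f. continuous_on {a..b} f \<and> (\<forall>x\<in>{a..b}. \<bar>f x\<bar> \<le> 1) \<longrightarrow>
              (\<forall>x\<in>{a..b}. \<bar>spline_proj l1 l2 a b ts f x\<bar> \<le> C))"
proof (intro exI allI impI ballI)
  fix a b :: real and ts :: "real list" and f :: "real \<Rightarrow> real" and x :: real
  assume part: "is_partition a b ts"
    and fx: "continuous_on {a..b} f \<and> (\<forall>x\<in>{a..b}. \<bar>f x\<bar> \<le> 1)" and x: "x \<in> {a..b}"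
  have len: "2 \<le> length ts" and srt: "sorted_wrt (<) ts" and hd: "hd ts = a" and lst: "last ts = b"
    using part unfolding is_partition_def by auto
  interpret spl l1 l2 ts using assms(1) assms(2) len srt by (rule spl.intro)
  have ne: "ts \<noteq> []" using len by auto
  have a: "a = ts!0" using hd ne by (simp add: hd_conv_nth)
  have b: "b = ts!m" using lst ne by (simp add: last_conv_nth m_def)
  have "\<bar>spline_proj l1 l2 (ts!0) (ts!m) ts f x\<bar> \<le> 2 / c0"
    using main_bound[of f x] fx x unfolding a b by auto
  then show "\<bar>spline_proj l1 l2 a b ts f x\<bar> \<le> 2 / (min l1 (- l2) / (3 * (l1 - l2)))"
    unfolding a b c0_def .
qed


end
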